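(* Under the standing assumptions, for every $j$ with $1\le j\le n$ and every $z\in\mathbb C$, \begin{align*} \widetilde\alpha_2^{(2j+1)}(z)&=\widetilde\alpha_2^{(2j-1)}(z)-(z-a)\,\Theta_{1,j}^*(\bar z)\,\widehat K_{1,j}^{-1}\,\Gamma_{1,j}(a),\\ \widetilde\beta_2^{(2j+1)}(z)&=\widetilde\beta_2^{(2j-1)}(z)+(z-a)\,\Theta_{1,j}^*(\bar z)\,\widehat K_{1,j}^{-1}\,\Theta_{1,j}(a),\\ \widetilde\gamma_2^{(2j+1)}(z)&=\widetilde\gamma_2^{(2j-1)}(z)-(z-a)\,\Gamma_{1,j}^*(\bar z)\,\widehat K_{1,j}^{-1}\,\Gamma_{1,j}(a),\\ \widetilde\delta_2^{(2j+1)}(z)&=\widetilde\delta_2^{(2j-1)}(z)+(z-a)\,\Gamma_{1,j}^*(\bar z)\,\widehat K_{1,j}^{-1}\,\Theta_{1,j}(a). \end{align*}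
   Context: Let $q,n\in\mathbb N$ and let $a<b$ be real numbers. All matrices are complex; $I_q$, $0_q$ are the $q\times q$ identity and zero matrices; for a matrix-valued function $F$, $F^*(\bar z)$ means $(F(\bar z))^*$. Let $s_0,\dots,s_{2n+1}$ be Hermitian $q\times q$ matrices. Define $K_{1,j}:=(bs_{l+k}-s_{l+k+1})_{l,k=0}^{j}$ and assume (standing assumption) that $K_{1,n}$ is positive definite. Let $T_0:=0_q$ and, for $j\ge1$, let $T_j$ be the $(j+1)\times(j+1)$ block matrix (blocks of size $q\times q$) with $I_q$ in the block positions $(l+1,l)$, $l=0,\dots,j-1$, and $0_q$ elsewhere; $R_j(z):=(I_{(j+1)q}-zT_j)^{-1}$; $v_j:=\mathrm{col}(I_q,0_q,\dots,0_q)\in\mathbb C^{(j+1)q\times q}$. Let $\widetilde u_{1,j}:=\mathrm{col}(s_0,s_1-bs_0,\dots,s_j-bs_{j-1})\in\mathbb C^{(j+1)q\times q}$ ($\widetilde u_{1,0}=s_0$), and for $j\ge1$ let $\widetilde Y_{1,j}:=\mathrm{col}(bs_j-s_{j+1},\dots,bs_{2j-1}-s_{2j})$. Schur complements: $\widehat K_{1,0}:=bs_0-s_1$, $\widehat K_{1,j}:=bs_{2j}-s_{2j+1}-\widetilde Y_{1,j}^*K_{1,j-1}^{-1}\widetilde Y_{1,j}$ ($j\ge1$). Polynomials: $\Gamma_{1,0}:=I_q$, $\Theta_{1,0}:=s_0$, and for $j\ge1$: $\Gamma_{1,j}(z):=(-\widetilde Y_{1,j}^*K_{1,j-1}^{-1},\,I_q)R_j(z)v_j$,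 $\Theta_{1,j}(z):=(-\widetilde Y_{1,j}^*K_{1,j-1}^{-1},\,I_q)R_j(z)\widetilde u_{1,j}$. For $0\le j\le n$ the $2q\times2q$ matrix polynomial $\widetilde U_2^{(2j+1)}=\begin{pmatrix}\widetilde\alpha_2^{(2j+1)}&\widetilde\beta_2^{(2j+1)}\\ \widetilde\gamma_2^{(2j+1)}&\widetilde\delta_2^{(2j+1)}\end{pmatrix}$ is defined by $\widetilde\alpha_2^{(2j+1)}(z)=I_q-(z-a)\widetilde u_{1,j}^*R_j^*(\bar z)K_{1,j}^{-1}R_j(a)v_j$, $\widetilde\beta_2^{(2j+1)}(z)=(z-a)\widetilde u_{1,j}^*R_j^*(\bar z)K_{1,j}^{-1}R_j(a)\widetilde u_{1,j}$, $\widetilde\gamma_2^{(2j+1)}(z)=-(z-a)v_j^*R_j^*(\bar z)K_{1,j}^{-1}R_j(a)v_j$, $\widetilde\delta_2^{(2j+1)}(z)=I_q+(z-a)v_j^*R_j^*(\bar z)K_{1,j}^{-1}R_j(a)\widetilde u_{1,j}$. *)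

theory Defs
  imports "Jordan_Normal_Form.Schur_Decomposition"
begin

text \<open>All matrices are complex Jordan_Normal_Form matrices with explicit dimensions.
  The block size is q; a block matrix with m block rows and k block columns
  is given by its blocks F l k (each q x q).\<close>

definition blk :: "nat \<Rightarrow> nat \<Rightarrow> nat \<Rightarrow> (nat \<Rightarrow> nat \<Rightarrow> complex mat) \<Rightarrow> complex mat" where
  "blk q m k F = mat (m * q) (k * q) (\<lambda>(r, c). F (r div q) (c div q) $$ (r mod q, c mod q))"

definition hcat :: "complex mat \<Rightarrow> complex mat \<Rightarrow> complex mat" where
  "hcat A B = mat (dim_row A) (dim_col A + dim_col B)
     (\<lambda>(r, c). if c < dim_col A then A $$ (r, c) else B $$ (r, c - dim_col A))"

definition minv :: "complex mat \<Rightarrow> complex mat" where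
  "minv A = (SOME B. B \<in> carrier_mat (dim_row A) (dim_row A) \<and> A * B = 1\<^sub>m (dim_row A)
                      \<and> B * A = 1\<^sub>m (dim_row A))"

definition hermitian_mat :: "complex mat \<Rightarrow> bool" where
  "hermitian_mat A \<longleftrightarrow> square_mat A \<and> mat_adjoint A = A"

definition pos_def_mat :: "complex mat \<Rightarrow> bool" where
  "pos_def_mat A \<longleftrightarrow> hermitian_mat A \<and>
     (\<forall>x \<in> carrier_vec (dim_row A). x \<noteq> 0\<^sub>v (dim_row A) \<longrightarrow> 0 < Re ((A *\<^sub>v x) \<bullet>c x))"

definition K1 :: "nat \<Rightarrow> real \<Rightarrow> (nat \<Rightarrow> complex mat) \<Rightarrow> nat \<Rightarrow> complex mat" where
  "K1 q b s j = blk q (j+1) (j+1) (\<lambda>l k. complex_of_real b \<cdot>\<^sub>m s (l+k) - s (l+k+1))"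

definition Tm :: "nat \<Rightarrow> nat \<Rightarrow> complex mat" where
  "Tm q j = blk q (j+1) (j+1) (\<lambda>l k. if l = k + 1 then 1\<^sub>m q else 0\<^sub>m q q)"

definition Rm :: "nat \<Rightarrow> nat \<Rightarrow> complex \<Rightarrow> complex mat" where
  "Rm q j z = minv (1\<^sub>m ((j+1) * q) - z \<cdot>\<^sub>m Tm q j)"

definition vm :: "nat \<Rightarrow> nat \<Rightarrow> complex mat" where
  "vm q j = blk q (j+1) 1 (\<lambda>l k. if l = 0 then 1\<^sub>m q else 0\<^sub>m q q)"

definition u1 :: "nat \<Rightarrow> real \<Rightarrow> (nat \<Rightarrow> complex mat) \<Rightarrow> nat \<Rightarrow> complex mat" where
  "u1 q b s j = blk q (j+1) 1
     (\<lambda>l k. if l = 0 then s 0 else s l - complex_of_real b \<cdot>\<^sub>m s (l - 1))"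

definition Y1 :: "nat \<Rightarrow> real \<Rightarrow> (nat \<Rightarrow> complex mat) \<Rightarrow> nat \<Rightarrow> complex mat" where
  "Y1 q b s j = blk q j 1 (\<lambda>l k. complex_of_real b \<cdot>\<^sub>m s (j+l) - s (j+l+1))"

definition Khat1 :: "nat \<Rightarrow> real \<Rightarrow> (nat \<Rightarrow> complex mat) \<Rightarrow> nat \<Rightarrow> complex mat" where
  "Khat1 q b s j = (if j = 0 then complex_of_real b \<cdot>\<^sub>m s 0 - s 1
     else (complex_of_real b \<cdot>\<^sub>m s (2*j) - s (2*j+1))
           - mat_adjoint (Y1 q b s j) * minv (K1 q b s (j-1)) * Y1 q b s j)"

definition rowm :: "nat \<Rightarrow> real \<Rightarrow> (nat \<Rightarrow> complex mat) \<Rightarrow> nat \<Rightarrow> complex mat" where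
  "rowm q b s j = hcat (- (mat_adjoint (Y1 q b s j) * minv (K1 q b s (j-1)))) (1\<^sub>m q)"

definition Gamma1 :: "nat \<Rightarrow> real \<Rightarrow> (nat \<Rightarrow> complex mat) \<Rightarrow> nat \<Rightarrow> complex \<Rightarrow> complex mat" where
  "Gamma1 q b s j z = (if j = 0 then 1\<^sub>m q else rowm q b s j * Rm q j z * vm q j)"

definition Theta1 :: "nat \<Rightarrow> real \<Rightarrow> (nat \<Rightarrow> complex mat) \<Rightarrow> nat \<Rightarrow> complex \<Rightarrow> complex mat" where
  "Theta1 q b s j z = (if j = 0 then s 0 else rowm q b s j * Rm q j z * u1 q b s j)"

text \<open>alpha2 q a b s j z is tilde-alpha_2^{(2j+1)}(z), etc.\<close>
definition alpha2 :: "nat \<Rightarrow> real \<Rightarrow> real \<Rightarrow> (nat \<Rightarrow> complex mat) \<Rightarrow> nat \<Rightarrow> complex \<Rightarrow> complex mat" where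
  "alpha2 q a b s j z = 1\<^sub>m q - (z - complex_of_real a) \<cdot>\<^sub>m
     (mat_adjoint (u1 q b s j) * mat_adjoint (Rm q j (cnj z)) * minv (K1 q b s j)
       * Rm q j (complex_of_real a) * vm q j)"

definition beta2 :: "nat \<Rightarrow> real \<Rightarrow> real \<Rightarrow> (nat \<Rightarrow> complex mat) \<Rightarrow> nat \<Rightarrow> complex \<Rightarrow> complex mat" where
  "beta2 q a b s j z = (z - complex_of_real a) \<cdot>\<^sub>m
     (mat_adjoint (u1 q b s j) * mat_adjoint (Rm q j (cnj z)) * minv (K1 q b s j)
       * Rm q j (complex_of_real a) * u1 q b s j)"

definition gamma2 :: "nat \<Rightarrow> real \<Rightarrow> real \<Rightarrow> (nat \<Rightarrow> complex mat) \<Rightarrow> nat \<Rightarrow> complex \<Rightarrow> complex mat" where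
  "gamma2 q a b s j z = - ((z - complex_of_real a) \<cdot>\<^sub>m
     (mat_adjoint (vm q j) * mat_adjoint (Rm q j (cnj z)) * minv (K1 q b s j)
       * Rm q j (complex_of_real a) * vm q j))"

definition delta2 :: "nat \<Rightarrow> real \<Rightarrow> real \<Rightarrow> (nat \<Rightarrow> complex mat) \<Rightarrow> nat \<Rightarrow> complex \<Rightarrow> complex mat" where
  "delta2 q a b s j z = 1\<^sub>m q + (z - complex_of_real a) \<cdot>\<^sub>m
     (mat_adjoint (vm q j) * mat_adjoint (Rm q j (cnj z)) * minv (K1 q b s j)
       * Rm q j (complex_of_real a) * u1 q b s j)"

end

theory Submission
  imports Defs
begin


lemma blk_carrier[simp]: "blk q m k F \<in> carrier_mat (m*q) (k*q)"
  by (simp add: blk_def)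
lemma blk_dims[simp]: "dim_row (blk q m k F) = m*q" "dim_col (blk q m k F) = k*q"
  by (simp_all add: blk_def)
lemma blk_index[simp]: "r < m*q \<Longrightarrow> c < k*q \<Longrightarrow>
   blk q m k F $$ (r,c) = F (r div q) (c div q) $$ (r mod q, c mod q)"
  by (simp add: blk_def)

lemma adj_dims[simp]: "dim_row (mat_adjoint A) = dim_col A" "dim_col (mat_adjoint A) = dim_row A"
  by (simp_all add: mat_adjoint_def)
lemma adj_index[simp]: "i < dim_col A \<Longrightarrow> k < dim_row A \<Longrightarrow>
   mat_adjoint A $$ (i,k) = cnj (A $$ (k,i))"
  by (simp add: mat_adjoint_def mat_of_rows_def)
lemma adj_carrier[simp]: "A \<in> carrier_mat m k \<Longrightarrow> mat_adjoint A \<in> carrier_mat k m"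
  by (intro carrier_matI) (simp_all only: adj_dims carrier_matD)

lemma adj_adj[simp]: "mat_adjoint (mat_adjoint (A::complex mat)) = A"
  by (rule eq_matI, auto)

lemma mult_entry: "A \<in> carrier_mat r n \<Longrightarrow> B \<in> carrier_mat n c \<Longrightarrow> i < r \<Longrightarrow> k < c \<Longrightarrow>
  (A*B) $$ (i,k) = (\<Sum>l\<in>{0..<n}. A $$ (i,l) * B $$ (l,k))"
proof -
  assume a: "A \<in> carrier_mat r n" "B \<in> carrier_mat n c" "i < r" "k < c"
  then have "(A*B) $$ (i,k) = row A i \<bullet> col B k" by simp
  also have "\<dots> = (\<Sum>l\<in>{0..<n}. A $$ (i,l) * B $$ (l,k))"
    unfolding scalar_prod_def by (rule sum.cong) (use a in auto)
  finally show ?thesis .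
qed

lemma adj_mult: fixes A B :: "complex mat"
  assumes A: "A \<in> carrier_mat m k" and B: "B \<in> carrier_mat k l"
  shows "mat_adjoint (A*B) = mat_adjoint B * mat_adjoint A"
proof (rule eq_matI)
  fix i j assume i: "i < dim_row (mat_adjoint B * mat_adjoint A)" and j: "j < dim_col (mat_adjoint B * mat_adjoint A)"
  have i': "i < l" and j': "j < m" using i j A B by auto
  have "mat_adjoint (A*B) $$ (i,j) = cnj ((A*B) $$ (j,i))" using i' j' A B by simp
  also have "\<dots> = cnj (\<Sum>t\<in>{0..<k}. A $$ (j,t) * B $$ (t,i))" by (simp only: mult_entry[OF A B j' i'])
  also have "\<dots> = (\<Sum>t\<in>{0..<k}. mat_adjoint B $$ (i,t) * mat_adjoint A $$ (t,j))"
    unfolding cnj_sum by (rule sum.cong) (use A B i' j' in auto)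
  also have "\<dots> = (mat_adjoint B * mat_adjoint A) $$ (i,j)"
    by (rule mult_entry[symmetric]) (use A B i' j' in auto)
  finally show "mat_adjoint (A*B) $$ (i,j) = (mat_adjoint B * mat_adjoint A) $$ (i,j)" .
qed (use A B in auto)

lemma adj_add: fixes A B :: "complex mat"
  assumes "A \<in> carrier_mat m k" "B \<in> carrier_mat m k"
  shows "mat_adjoint (A+B) = mat_adjoint A + mat_adjoint B"
  apply (rule eq_matI) using assms by auto

lemma adj_minus: fixes A B :: "complex mat"
  assumes "A \<in> carrier_mat m k" "B \<in> carrier_mat m k"
  shows "mat_adjoint (A-B) = mat_adjoint A - mat_adjoint B"
  apply (rule eq_matI) using assms by auto

lemma adj_uminus: fixes A :: "complex mat"
  shows "mat_adjoint (-A) = - mat_adjoint A"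
  apply (rule eq_matI) by auto

lemma adj_one[simp]: "mat_adjoint (1\<^sub>m n :: complex mat) = 1\<^sub>m n"
  by (rule eq_matI, auto)

lemma minv_spec:
  fixes A :: "complex mat"
  assumes A: "A \<in> carrier_mat n n" and d: "det A \<noteq> 0"
  shows "minv A \<in> carrier_mat n n \<and> A * minv A = 1\<^sub>m n \<and> minv A * A = 1\<^sub>m n"
proof -
  let ?R = "ring_mat TYPE(complex) n undefined"
  have U: "A \<in> Units ?R" by (rule det_non_zero_imp_unit[OF A d])
  then obtain B where B: "B \<in> carrier_mat n n" "A * B = 1\<^sub>m n" "B * A = 1\<^sub>m n"
    unfolding Units_def by (auto simp: ring_mat_simps)
  have dr: "dim_row A = n" using A by auto
  show ?thesis unfolding minv_def dr
    by (rule someI[of "\<lambda>B. B \<in> carrier_mat n n \<and> A * B = 1\<^sub>m n \<and> B * A = 1\<^sub>m n"], use B in blast)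
qed

lemma minv_unique:
  fixes A B :: "complex mat"
  assumes A: "A \<in> carrier_mat n n" and B: "B \<in> carrier_mat n n" and AB: "A * B = 1\<^sub>m n"
  shows "minv A = B"
proof -
  have "det A \<noteq> 0" using det_mult[OF A B] AB by auto
  from minv_spec[OF A this] have M: "minv A \<in> carrier_mat n n" "minv A * A = 1\<^sub>m n" by auto
  have "minv A = minv A * (A * B)" using AB M right_mult_one_mat[of "minv A" n n] by simp
  also have "\<dots> = (minv A * A) * B" by (rule assoc_mult_mat[symmetric, OF M(1) A B])
  also have "\<dots> = B" using M B by simp
  finally show ?thesis .
qed

lemma inj_det:
  fixes A :: "complex mat"
  assumes A: "A \<in> carrier_mat n n" and inj: "\<And>v. v \<in> carrier_vec n \<Longrightarrow> A *\<^sub>v v = 0\<^sub>v n \<Longrightarrow> v = 0\<^sub>v n"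
  shows "det A \<noteq> 0"
  using det_0_iff_vec_prod_zero[OF A] inj by blast

lemma sd1: "(\<Sum>l\<in>{0..<M::nat}. (if a = l then 1 else 0) * (f l::complex)) = (if a < M then f a else 0)"
proof -
  have "(\<Sum>l\<in>{0..<M}. (if a = l then 1 else 0) * f l) = (\<Sum>l\<in>{0..<M}. if a = l then f l else 0)"
    by (rule sum.cong) auto
  also have "\<dots> = (if a \<in> {0..<M} then f a else 0)" by (rule sum.delta') simp
  finally show ?thesis by simp
qed
lemma sd2: "(\<Sum>l\<in>{0..<M::nat}. (f l::complex) * (if a = l then 1 else 0)) = (if a < M then f a else 0)"
proof -
  have "(\<Sum>l\<in>{0..<M::nat}. (f l::complex) * (if a = l then 1 else 0)) = (\<Sum>l\<in>{0..<M}. if l = a then f l else 0)"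
    by (rule sum.cong) auto
  also have "\<dots> = (if a \<in> {0..<M} then f a else 0)" by (rule sum.delta) simp
  finally show ?thesis by simp
qed
lemma sd3: "(\<Sum>l\<in>{0..<M::nat}. (if l = a then 1 else 0) * (f l::complex)) = (if a < M then f a else 0)"
proof -
  have "(\<Sum>l\<in>{0..<M::nat}. (if l = a then 1 else 0) * (f l::complex)) = (\<Sum>l\<in>{0..<M}. if l = a then f l else 0)"
    by (rule sum.cong) auto
  also have "\<dots> = (if a \<in> {0..<M} then f a else 0)" by (rule sum.delta) simp
  finally show ?thesis by simp
qed
lemma sd4: "(\<Sum>l\<in>{0..<M::nat}. (f l::complex) * (if l = a then 1 else 0)) = (if a < M then f a else 0)"
proof -
  have "(\<Sum>l\<in>{0..<M::nat}. (f l::complex) * (if l = a then 1 else 0)) = (\<Sum>l\<in>{0..<M}. if l = a then f l else 0)"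
    by (rule sum.cong) auto
  also have "\<dots> = (if a \<in> {0..<M} then f a else 0)" by (rule sum.delta) simp
  finally show ?thesis by simp
qed
lemma sd5: "(\<Sum>l\<in>{0..<q::nat}. (f l::complex) * (if k = N + l then 1 else 0)) = (if N \<le> k \<and> k < N + q then f (k-N) else 0)"
proof -
  have "(\<Sum>l\<in>{0..<q}. (f l::complex) * (if k = N + l then 1 else 0)) = (\<Sum>l\<in>{0..<q}. if N \<le> k \<and> k - N = l then f l else 0)"
    by (rule sum.cong) auto
  also have "\<dots> = (if N \<le> k \<and> k < N + q then f (k-N) else 0)"
    by (cases "N \<le> k") auto
  finally show ?thesis .
qed
lemma sd6: "(\<Sum>l\<in>{0..<q::nat}. (if k = N + l then 1 else 0) * (f l::complex)) = (if N \<le> k \<and> k < N + q then f (k-N) else 0)"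
proof -
  have "(\<Sum>l\<in>{0..<q::nat}. (if k = N + l then 1 else 0) * (f l::complex)) = (\<Sum>l\<in>{0..<q::nat}. (f l::complex) * (if k = N + l then 1 else 0))"
    by (rule sum.cong) auto
  then show ?thesis using sd5[where q=q and f=f and k=k and N=N] by simp
qed

definition selP :: "nat \<Rightarrow> nat \<Rightarrow> complex mat" where
  "selP N M = mat N M (\<lambda>(i,k). if i = k then 1 else 0)"
definition selQ :: "nat \<Rightarrow> nat \<Rightarrow> complex mat" where
  "selQ N q = mat q (N+q) (\<lambda>(i,k). if k = N + i then 1 else 0)"

lemma selP_carrier[simp]: "selP N M \<in> carrier_mat N M" by (simp add: selP_def)
lemma selQ_carrier[simp]: "selQ N q \<in> carrier_mat q (N+q)" by (simp add: selQ_def)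
lemma selP_dims[simp]: "dim_row (selP N M) = N" "dim_col (selP N M) = M" by (simp_all add: selP_def)
lemma selQ_dims[simp]: "dim_row (selQ N q) = q" "dim_col (selQ N q) = N+q" by (simp_all add: selQ_def)

lemma adj_selP: "mat_adjoint (selP N M) = mat M N (\<lambda>(i,k). if i = k then 1 else 0)"
proof (rule eq_matI)
  fix i k assume "i < dim_row (mat M N (\<lambda>(i,k). if i = k then (1::complex) else 0))" "k < dim_col (mat M N (\<lambda>(i,k). if i = k then (1::complex) else 0))"
  then have i: "i < M" and k: "k < N" by simp_all
  have "mat_adjoint (selP N M) $$ (i,k) = cnj (selP N M $$ (k,i))"
    by (rule adj_index) (simp_all only: selP_dims i k)
  also have "\<dots> = cnj (if k = i then 1 else 0)" unfolding selP_def using i k by simp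
  also have "\<dots> = (if i = k then 1 else 0)" by auto
  finally show "mat_adjoint (selP N M) $$ (i,k) = mat M N (\<lambda>(i,k). if i = k then 1 else 0) $$ (i,k)"
    using i k by simp
qed (simp_all only: adj_dims selP_dims dim_row_mat dim_col_mat)
lemma adj_selQ: "mat_adjoint (selQ N q) = mat (N+q) q (\<lambda>(i,k). if i = N + k then 1 else 0)"
proof (rule eq_matI)
  fix i k assume "i < dim_row (mat (N+q) q (\<lambda>(i,k). if i = N + k then (1::complex) else 0))" "k < dim_col (mat (N+q) q (\<lambda>(i,k). if i = N + k then (1::complex) else 0))"
  then have i: "i < N+q" and k: "k < q" by simp_all
  have "mat_adjoint (selQ N q) $$ (i,k) = cnj (selQ N q $$ (k,i))"
    by (rule adj_index) (simp_all only: selQ_dims i k)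
  also have "\<dots> = cnj (if i = N + k then 1 else 0)" unfolding selQ_def using i k by simp
  also have "\<dots> = (if i = N + k then 1 else 0)" by auto
  finally show "mat_adjoint (selQ N q) $$ (i,k) = mat (N+q) q (\<lambda>(i,k). if i = N + k then 1 else 0) $$ (i,k)"
    using i k by simp
qed (simp_all only: adj_dims selQ_dims dim_row_mat dim_col_mat)

lemma selP_mult: assumes "N \<le> M" and "X \<in> carrier_mat M c"
  shows "selP N M * X = mat N c (\<lambda>(i,k). X $$ (i,k))"
proof (rule eq_matI)
  fix i k assume ik: "i < dim_row (mat N c (\<lambda>(i,k). X $$ (i,k)))" "k < dim_col (mat N c (\<lambda>(i,k). X $$ (i,k)))"
  then have i: "i < N" and k: "k < c" by simp_all
  have cA: "selP N M \<in> carrier_mat N (M)" using assms by (simp add: adj_selP adj_selQ)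
  have cB: "X \<in> carrier_mat (M) c" using assms by (simp add: adj_selP adj_selQ)
  have "(selP N M * X) $$ (i,k) = (\<Sum>l\<in>{0..<M}. selP N M $$ (i,l) * X $$ (l,k))"
    by (rule mult_entry[OF cA cB i k])
  also have "\<dots> = (\<Sum>l\<in>{0..<M}. (if i = l then 1 else 0) * X $$ (l,k))"
    by (rule sum.cong) (use i k in \<open>simp_all add: selP_def\<close>)
  also have "\<dots> = X $$ (i,k)" using i k assms by (simp add: sd1)
  finally show "(selP N M * X) $$ (i,k) = mat N c (\<lambda>(i,k). X $$ (i,k)) $$ (i,k)" using i k by simp
next
  have cA: "selP N M \<in> carrier_mat N (M)" using assms by (simp add: adj_selP adj_selQ)
  have cB: "X \<in> carrier_mat (M) c" using assms by (simp add: adj_selP adj_selQ)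
  show "dim_row (selP N M * X) = dim_row (mat N c (\<lambda>(i,k). X $$ (i,k)))" using cA by simp
  show "dim_col (selP N M * X) = dim_col (mat N c (\<lambda>(i,k). X $$ (i,k)))" using cB by simp
qed

lemma mult_selP: assumes "N \<le> M" and "X \<in> carrier_mat r N"
  shows "X * selP N M = mat r M (\<lambda>(i,k). if k < N then X $$ (i,k) else 0)"
proof (rule eq_matI)
  fix i k assume ik: "i < dim_row (mat r M (\<lambda>(i,k). if k < N then X $$ (i,k) else 0))" "k < dim_col (mat r M (\<lambda>(i,k). if k < N then X $$ (i,k) else 0))"
  then have i: "i < r" and k: "k < M" by simp_all
  have cA: "X \<in> carrier_mat r (N)" using assms by (simp add: adj_selP adj_selQ)
  have cB: "selP N M \<in> carrier_mat (N) M" using assms by (simp add: adj_selP adj_selQ)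
  have "(X * selP N M) $$ (i,k) = (\<Sum>l\<in>{0..<N}. X $$ (i,l) * selP N M $$ (l,k))"
    by (rule mult_entry[OF cA cB i k])
  also have "\<dots> = (\<Sum>l\<in>{0..<N}. X $$ (i,l) * (if l = k then 1 else 0))"
    by (rule sum.cong) (use i k in \<open>simp_all add: selP_def\<close>)
  also have "\<dots> = (if k < N then X $$ (i,k) else 0)" using i k assms by (simp add: sd4)
  finally show "(X * selP N M) $$ (i,k) = mat r M (\<lambda>(i,k). if k < N then X $$ (i,k) else 0) $$ (i,k)" using i k by simp
next
  have cA: "X \<in> carrier_mat r (N)" using assms by (simp add: adj_selP adj_selQ)
  have cB: "selP N M \<in> carrier_mat (N) M" using assms by (simp add: adj_selP adj_selQ)
  show "dim_row (X * selP N M) = dim_row (mat r M (\<lambda>(i,k). if k < N then X $$ (i,k) else 0))" using cA by simp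
  show "dim_col (X * selP N M) = dim_col (mat r M (\<lambda>(i,k). if k < N then X $$ (i,k) else 0))" using cB by simp
qed

lemma adj_selP_mult: assumes "N \<le> M" and "X \<in> carrier_mat N c"
  shows "mat_adjoint (selP N M) * X = mat M c (\<lambda>(i,k). if i < N then X $$ (i,k) else 0)"
proof (rule eq_matI)
  fix i k assume ik: "i < dim_row (mat M c (\<lambda>(i,k). if i < N then X $$ (i,k) else 0))" "k < dim_col (mat M c (\<lambda>(i,k). if i < N then X $$ (i,k) else 0))"
  then have i: "i < M" and k: "k < c" by simp_all
  have cA: "mat_adjoint (selP N M) \<in> carrier_mat M (N)" using assms by (simp add: adj_selP adj_selQ)
  have cB: "X \<in> carrier_mat (N) c" using assms by (simp add: adj_selP adj_selQ)
  have "(mat_adjoint (selP N M) * X) $$ (i,k) = (\<Sum>l\<in>{0..<N}. mat_adjoint (selP N M) $$ (i,l) * X $$ (l,k))"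
    by (rule mult_entry[OF cA cB i k])
  also have "\<dots> = (\<Sum>l\<in>{0..<N}. (if i = l then 1 else 0) * X $$ (l,k))"
    by (rule sum.cong) (use i k in \<open>simp_all add: adj_selP\<close>)
  also have "\<dots> = (if i < N then X $$ (i,k) else 0)" using i k assms by (simp add: sd1)
  finally show "(mat_adjoint (selP N M) * X) $$ (i,k) = mat M c (\<lambda>(i,k). if i < N then X $$ (i,k) else 0) $$ (i,k)" using i k by simp
next
  have cA: "mat_adjoint (selP N M) \<in> carrier_mat M (N)" using assms by (simp add: adj_selP adj_selQ)
  have cB: "X \<in> carrier_mat (N) c" using assms by (simp add: adj_selP adj_selQ)
  show "dim_row (mat_adjoint (selP N M) * X) = dim_row (mat M c (\<lambda>(i,k). if i < N then X $$ (i,k) else 0))" using cA by simp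
  show "dim_col (mat_adjoint (selP N M) * X) = dim_col (mat M c (\<lambda>(i,k). if i < N then X $$ (i,k) else 0))" using cB by simp
qed

lemma mult_adj_selP: assumes "N \<le> M" and "X \<in> carrier_mat r M"
  shows "X * mat_adjoint (selP N M) = mat r N (\<lambda>(i,k). X $$ (i,k))"
proof (rule eq_matI)
  fix i k assume ik: "i < dim_row (mat r N (\<lambda>(i,k). X $$ (i,k)))" "k < dim_col (mat r N (\<lambda>(i,k). X $$ (i,k)))"
  then have i: "i < r" and k: "k < N" by simp_all
  have cA: "X \<in> carrier_mat r (M)" using assms by (simp add: adj_selP adj_selQ)
  have cB: "mat_adjoint (selP N M) \<in> carrier_mat (M) N" using assms by (simp add: adj_selP adj_selQ)
  have "(X * mat_adjoint (selP N M)) $$ (i,k) = (\<Sum>l\<in>{0..<M}. X $$ (i,l) * mat_adjoint (selP N M) $$ (l,k))"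
    by (rule mult_entry[OF cA cB i k])
  also have "\<dots> = (\<Sum>l\<in>{0..<M}. X $$ (i,l) * (if l = k then 1 else 0))"
    by (rule sum.cong) (use i k in \<open>simp_all add: adj_selP\<close>)
  also have "\<dots> = X $$ (i,k)" using i k assms by (simp add: sd4)
  finally show "(X * mat_adjoint (selP N M)) $$ (i,k) = mat r N (\<lambda>(i,k). X $$ (i,k)) $$ (i,k)" using i k by simp
next
  have cA: "X \<in> carrier_mat r (M)" using assms by (simp add: adj_selP adj_selQ)
  have cB: "mat_adjoint (selP N M) \<in> carrier_mat (M) N" using assms by (simp add: adj_selP adj_selQ)
  show "dim_row (X * mat_adjoint (selP N M)) = dim_row (mat r N (\<lambda>(i,k). X $$ (i,k)))" using cA by simp
  show "dim_col (X * mat_adjoint (selP N M)) = dim_col (mat r N (\<lambda>(i,k). X $$ (i,k)))" using cB by simp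
qed

lemma selQ_mult: assumes "X \<in> carrier_mat (N+q) c"
  shows "selQ N q * X = mat q c (\<lambda>(i,k). X $$ (N+i,k))"
proof (rule eq_matI)
  fix i k assume ik: "i < dim_row (mat q c (\<lambda>(i,k). X $$ (N+i,k)))" "k < dim_col (mat q c (\<lambda>(i,k). X $$ (N+i,k)))"
  then have i: "i < q" and k: "k < c" by simp_all
  have cA: "selQ N q \<in> carrier_mat q (N+q)" using assms by (simp add: adj_selP adj_selQ)
  have cB: "X \<in> carrier_mat (N+q) c" using assms by (simp add: adj_selP adj_selQ)
  have "(selQ N q * X) $$ (i,k) = (\<Sum>l\<in>{0..<N+q}. selQ N q $$ (i,l) * X $$ (l,k))"
    by (rule mult_entry[OF cA cB i k])
  also have "\<dots> = (\<Sum>l\<in>{0..<N+q}. (if l = N + i then 1 else 0) * X $$ (l,k))"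
    by (rule sum.cong) (use i k in \<open>simp_all add: selQ_def\<close>)
  also have "\<dots> = X $$ (N+i,k)" using i k assms by (simp add: sd3)
  finally show "(selQ N q * X) $$ (i,k) = mat q c (\<lambda>(i,k). X $$ (N+i,k)) $$ (i,k)" using i k by simp
next
  have cA: "selQ N q \<in> carrier_mat q (N+q)" using assms by (simp add: adj_selP adj_selQ)
  have cB: "X \<in> carrier_mat (N+q) c" using assms by (simp add: adj_selP adj_selQ)
  show "dim_row (selQ N q * X) = dim_row (mat q c (\<lambda>(i,k). X $$ (N+i,k)))" using cA by simp
  show "dim_col (selQ N q * X) = dim_col (mat q c (\<lambda>(i,k). X $$ (N+i,k)))" using cB by simp
qed

lemma mult_selQ: assumes "X \<in> carrier_mat r q"
  shows "X * selQ N q = mat r (N+q) (\<lambda>(i,k). if N \<le> k then X $$ (i,k-N) else 0)"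
proof (rule eq_matI)
  fix i k assume ik: "i < dim_row (mat r (N+q) (\<lambda>(i,k). if N \<le> k then X $$ (i,k-N) else 0))" "k < dim_col (mat r (N+q) (\<lambda>(i,k). if N \<le> k then X $$ (i,k-N) else 0))"
  then have i: "i < r" and k: "k < (N+q)" by simp_all
  have cA: "X \<in> carrier_mat r (q)" using assms by (simp add: adj_selP adj_selQ)
  have cB: "selQ N q \<in> carrier_mat (q) (N+q)" using assms by (simp add: adj_selP adj_selQ)
  have "(X * selQ N q) $$ (i,k) = (\<Sum>l\<in>{0..<q}. X $$ (i,l) * selQ N q $$ (l,k))"
    by (rule mult_entry[OF cA cB i k])
  also have "\<dots> = (\<Sum>l\<in>{0..<q}. X $$ (i,l) * (if k = N + l then 1 else 0))"
    by (rule sum.cong) (use i k in \<open>simp_all add: selQ_def\<close>)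
  also have "\<dots> = (if N \<le> k then X $$ (i,k-N) else 0)" using i k assms by (simp add: sd5)
  finally show "(X * selQ N q) $$ (i,k) = mat r (N+q) (\<lambda>(i,k). if N \<le> k then X $$ (i,k-N) else 0) $$ (i,k)" using i k by simp
next
  have cA: "X \<in> carrier_mat r (q)" using assms by (simp add: adj_selP adj_selQ)
  have cB: "selQ N q \<in> carrier_mat (q) (N+q)" using assms by (simp add: adj_selP adj_selQ)
  show "dim_row (X * selQ N q) = dim_row (mat r (N+q) (\<lambda>(i,k). if N \<le> k then X $$ (i,k-N) else 0))" using cA by simp
  show "dim_col (X * selQ N q) = dim_col (mat r (N+q) (\<lambda>(i,k). if N \<le> k then X $$ (i,k-N) else 0))" using cB by simp
qed

lemma adj_selQ_mult: assumes "X \<in> carrier_mat q c"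
  shows "mat_adjoint (selQ N q) * X = mat (N+q) c (\<lambda>(i,k). if N \<le> i then X $$ (i-N,k) else 0)"
proof (rule eq_matI)
  fix i k assume ik: "i < dim_row (mat (N+q) c (\<lambda>(i,k). if N \<le> i then X $$ (i-N,k) else 0))" "k < dim_col (mat (N+q) c (\<lambda>(i,k). if N \<le> i then X $$ (i-N,k) else 0))"
  then have i: "i < (N+q)" and k: "k < c" by simp_all
  have cA: "mat_adjoint (selQ N q) \<in> carrier_mat (N+q) (q)" using assms by (simp add: adj_selP adj_selQ)
  have cB: "X \<in> carrier_mat (q) c" using assms by (simp add: adj_selP adj_selQ)
  have "(mat_adjoint (selQ N q) * X) $$ (i,k) = (\<Sum>l\<in>{0..<q}. mat_adjoint (selQ N q) $$ (i,l) * X $$ (l,k))"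
    by (rule mult_entry[OF cA cB i k])
  also have "\<dots> = (\<Sum>l\<in>{0..<q}. (if i = N + l then 1 else 0) * X $$ (l,k))"
    by (rule sum.cong) (use i k in \<open>simp_all add: adj_selQ\<close>)
  also have "\<dots> = (if N \<le> i then X $$ (i-N,k) else 0)" using i k assms by (simp add: sd6)
  finally show "(mat_adjoint (selQ N q) * X) $$ (i,k) = mat (N+q) c (\<lambda>(i,k). if N \<le> i then X $$ (i-N,k) else 0) $$ (i,k)" using i k by simp
next
  have cA: "mat_adjoint (selQ N q) \<in> carrier_mat (N+q) (q)" using assms by (simp add: adj_selP adj_selQ)
  have cB: "X \<in> carrier_mat (q) c" using assms by (simp add: adj_selP adj_selQ)
  show "dim_row (mat_adjoint (selQ N q) * X) = dim_row (mat (N+q) c (\<lambda>(i,k). if N \<le> i then X $$ (i-N,k) else 0))" using cA by simp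
  show "dim_col (mat_adjoint (selQ N q) * X) = dim_col (mat (N+q) c (\<lambda>(i,k). if N \<le> i then X $$ (i-N,k) else 0))" using cB by simp
qed

lemma mult_adj_selQ: assumes "X \<in> carrier_mat r (N+q)"
  shows "X * mat_adjoint (selQ N q) = mat r q (\<lambda>(i,k). X $$ (i,N+k))"
proof (rule eq_matI)
  fix i k assume ik: "i < dim_row (mat r q (\<lambda>(i,k). X $$ (i,N+k)))" "k < dim_col (mat r q (\<lambda>(i,k). X $$ (i,N+k)))"
  then have i: "i < r" and k: "k < q" by simp_all
  have cA: "X \<in> carrier_mat r (N+q)" using assms by (simp add: adj_selP adj_selQ)
  have cB: "mat_adjoint (selQ N q) \<in> carrier_mat (N+q) q" using assms by (simp add: adj_selP adj_selQ)
  have "(X * mat_adjoint (selQ N q)) $$ (i,k) = (\<Sum>l\<in>{0..<N+q}. X $$ (i,l) * mat_adjoint (selQ N q) $$ (l,k))"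
    by (rule mult_entry[OF cA cB i k])
  also have "\<dots> = (\<Sum>l\<in>{0..<N+q}. X $$ (i,l) * (if l = N + k then 1 else 0))"
    by (rule sum.cong) (use i k in \<open>simp_all add: adj_selQ\<close>)
  also have "\<dots> = X $$ (i,N+k)" using i k assms by (simp add: sd4)
  finally show "(X * mat_adjoint (selQ N q)) $$ (i,k) = mat r q (\<lambda>(i,k). X $$ (i,N+k)) $$ (i,k)" using i k by simp
next
  have cA: "X \<in> carrier_mat r (N+q)" using assms by (simp add: adj_selP adj_selQ)
  have cB: "mat_adjoint (selQ N q) \<in> carrier_mat (N+q) q" using assms by (simp add: adj_selP adj_selQ)
  show "dim_row (X * mat_adjoint (selQ N q)) = dim_row (mat r q (\<lambda>(i,k). X $$ (i,N+k)))" using cA by simp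
  show "dim_col (X * mat_adjoint (selQ N q)) = dim_col (mat r q (\<lambda>(i,k). X $$ (i,N+k)))" using cB by simp
qed



lemma herm_entry: "hermitian_mat A \<Longrightarrow> A \<in> carrier_mat q q \<Longrightarrow> i < q \<Longrightarrow> k < q \<Longrightarrow> cnj (A $$ (k,i)) = A $$ (i,k)"
  unfolding hermitian_mat_def by (metis adj_index carrier_matD(1) carrier_matD(2))

lemma divmod_last: assumes "N \<le> i" "i < N + q" "N = (m+1)*(q::nat)"
  shows "i div q = m+1" "i mod q = i - N"
proof -
  have q: "q > 0" using assms by auto
  have i: "i = (i - N) + q*(m+1)" using assms by (simp add: algebra_simps)
  have "i div q = (i - N) div q + (m+1)" by (subst i, simp only: div_mult_self2[OF q[THEN less_imp_neq[THEN not_sym]]])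
  then show "i div q = m+1" using assms by simp
  have "i mod q = (i - N) mod q" by (subst i, simp only: mod_mult_self2)
  then show "i mod q = i - N" using assms by simp
qed

lemma div_lt: "i < (m+1)*(q::nat) \<Longrightarrow> i div q \<le> m"
  by (metis Suc_eq_plus1 less_Suc_eq_le less_mult_imp_div_less)

lemma div_ge: "(m+1)*(q::nat) \<le> k \<Longrightarrow> 0 < q \<Longrightarrow> m+1 \<le> k div q"
  by (metis div_le_mono nonzero_mult_div_cancel_right less_not_refl2)

context
  fixes q :: nat and b :: real and s :: "nat \<Rightarrow> complex mat" and m :: nat
  assumes q: "1 \<le> q" and sH: "\<And>i. i \<le> 2*(m+1)+1 \<Longrightarrow> s i \<in> carrier_mat q q \<and> hermitian_mat (s i)"
begin

lemma Xentry: "a \<le> 2*(m+1) \<Longrightarrow> i<q \<Longrightarrow> k<q \<Longrightarrow>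
  (complex_of_real b \<cdot>\<^sub>m s a - s (a+1)) $$ (i,k) = complex_of_real b * s a $$ (i,k) - s (a+1) $$ (i,k)"
  using sH[of a] sH[of "a+1"] by auto

lemma Xherm: "a \<le> 2*(m+1) \<Longrightarrow> i<q \<Longrightarrow> k<q \<Longrightarrow>
  cnj ((complex_of_real b \<cdot>\<^sub>m s a - s (a+1)) $$ (k,i)) = (complex_of_real b \<cdot>\<^sub>m s a - s (a+1)) $$ (i,k)"
  using Xentry[of a i k] Xentry[of a k i] sH[of a] sH[of "a+1"] herm_entry[of "s a" q i k] herm_entry[of "s (a+1)" q i k]
  by simp

lemma e1: "(Suc m + 1) * q = (m+1)*q + q" by (simp add: algebra_simps)
lemma e2: "Suc m * q = (m+1)*q" by simp

lemma Kc1: "K1 q b s (Suc m) \<in> carrier_mat ((m+1)*q+q) ((m+1)*q+q)"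
  unfolding K1_def e1[symmetric] by (rule blk_carrier)
lemma Kc0: "K1 q b s m \<in> carrier_mat ((m+1)*q) ((m+1)*q)"
  unfolding K1_def by (rule blk_carrier)
lemma Yc: "Y1 q b s (Suc m) \<in> carrier_mat ((m+1)*q) q"
  unfolding Y1_def e2[symmetric] using blk_carrier[of q "Suc m" 1] by simp
lemma Dc: "complex_of_real b \<cdot>\<^sub>m s (2*Suc m) - s (2*Suc m+1) \<in> carrier_mat q q"
  using sH[of "2*Suc m"] sH[of "2*Suc m+1"] by auto

lemma K_herm: "mat_adjoint (K1 q b s m) = K1 q b s m"
proof (rule eq_matI)
  fix i k assume i: "i < dim_row (K1 q b s m)" and k: "k < dim_col (K1 q b s m)"
  then have i': "i < (m+1)*q" and k': "k < (m+1)*q" by (simp_all add: K1_def)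
  have q0: "0 < q" using q by simp
  have a: "k div q + i div q \<le> 2*(m+1)" using div_lt[OF i'] div_lt[OF k'] by simp
  show "mat_adjoint (K1 q b s m) $$ (i, k) = K1 q b s m $$ (i, k)"
    using i k Xherm[OF a, of "i mod q" "k mod q"] q0
    by (simp add: K1_def add.commute)
qed (simp_all add: K1_def)

lemma L1: "K1 q b s (Suc m) * mat_adjoint (selP ((m+1)*q) ((m+1)*q+q))
  = mat_adjoint (selP ((m+1)*q) ((m+1)*q+q)) * K1 q b s m + mat_adjoint (selQ ((m+1)*q) q) * mat_adjoint (Y1 q b s (Suc m))"
proof -
  let ?N = "(m+1)*q"
  let ?Y = "Y1 q b s (Suc m)"
  have LHS: "K1 q b s (Suc m) * mat_adjoint (selP ?N (?N+q)) = mat (?N+q) ?N (\<lambda>(i,k). K1 q b s (Suc m) $$ (i,k))"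
    by (rule mult_adj_selP[OF _ Kc1]) simp
  have R1: "mat_adjoint (selP ?N (?N+q)) * K1 q b s m = mat (?N+q) ?N (\<lambda>(i,k). if i < ?N then K1 q b s m $$ (i,k) else 0)"
    by (rule adj_selP_mult[OF _ Kc0]) simp
  have R2: "mat_adjoint (selQ ?N q) * mat_adjoint ?Y = mat (?N+q) ?N (\<lambda>(i,k). if ?N \<le> i then mat_adjoint ?Y $$ (i-?N,k) else 0)"
    by (rule adj_selQ_mult) (rule adj_carrier[OF Yc])
  have q0: "0 < q" using q by simp
  show ?thesis unfolding LHS R1 R2
  proof (rule eq_matI)
    fix i k assume ik: "i < dim_row (mat (?N+q) ?N (\<lambda>(i,k). if i < ?N then K1 q b s m $$ (i,k) else 0)
         + mat (?N+q) ?N (\<lambda>(i,k). if ?N \<le> i then mat_adjoint ?Y $$ (i-?N,k) else 0))"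
      "k < dim_col (mat (?N+q) ?N (\<lambda>(i,k). if i < ?N then K1 q b s m $$ (i,k) else 0)
         + mat (?N+q) ?N (\<lambda>(i,k). if ?N \<le> i then mat_adjoint ?Y $$ (i-?N,k) else 0))"
    then have i: "i < ?N + q" and k: "k < ?N" by simp_all
    have iS: "i < (Suc m + 1)*q" using i unfolding e1 .
    have kS: "k < (Suc m + 1)*q" using k unfolding e1 by simp
    have kdiv: "k div q \<le> m" by (rule div_lt[OF k])
    show "mat (?N+q) ?N (\<lambda>(i,k). K1 q b s (Suc m) $$ (i,k)) $$ (i,k) =
      (mat (?N+q) ?N (\<lambda>(i,k). if i < ?N then K1 q b s m $$ (i,k) else 0)
         + mat (?N+q) ?N (\<lambda>(i,k). if ?N \<le> i then mat_adjoint ?Y $$ (i-?N,k) else 0)) $$ (i,k)"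
    proof (cases "i < ?N")
      case True
      then show ?thesis using i k iS kS by (simp add: K1_def)
    next
      case False
      then have Ni: "?N \<le> i" by simp
      have d: "i div q = m+1" and md: "i mod q = i - ?N" using divmod_last[OF Ni i refl] by simp_all
      have iN: "i - ?N < q" using i Ni by simp
      have a: "Suc m + k div q \<le> 2*(m+1)" using kdiv by simp
      have "mat_adjoint ?Y $$ (i-?N, k) = cnj (?Y $$ (k, i-?N))"
        by (rule adj_index) (use iN k in \<open>simp_all add: Y1_def\<close>)
      also have "?Y $$ (k, i-?N) = (complex_of_real b \<cdot>\<^sub>m s (Suc m + k div q) - s (Suc m + k div q + 1)) $$ (k mod q, i - ?N)"
        unfolding Y1_def using iN k by simp
      finally have yv: "mat_adjoint ?Y $$ (i-?N, k) = (complex_of_real b \<cdot>\<^sub>m s (Suc m + k div q) - s (Suc m + k div q + 1)) $$ (i - ?N, k mod q)"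
        using Xherm[OF a, of "i - ?N" "k mod q"] iN q0 by simp
      have kv: "K1 q b s (Suc m) $$ (i,k) = (complex_of_real b \<cdot>\<^sub>m s (Suc m + k div q) - s (Suc m + k div q + 1)) $$ (i - ?N, k mod q)"
        unfolding K1_def using iS kS d md by simp
      show ?thesis using i k False yv kv by simp
    qed
  qed simp_all
qed

lemma L2: "K1 q b s (Suc m) * mat_adjoint (selQ ((m+1)*q) q)
  = mat_adjoint (selP ((m+1)*q) ((m+1)*q+q)) * Y1 q b s (Suc m) + mat_adjoint (selQ ((m+1)*q) q) * (complex_of_real b \<cdot>\<^sub>m s (2*Suc m) - s (2*Suc m+1))"
proof -
  let ?N = "(m+1)*q"
  let ?Y = "Y1 q b s (Suc m)"
  let ?D = "complex_of_real b \<cdot>\<^sub>m s (2*Suc m) - s (2*Suc m+1)"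
  have LHS: "K1 q b s (Suc m) * mat_adjoint (selQ ?N q) = mat (?N+q) q (\<lambda>(i,k). K1 q b s (Suc m) $$ (i,?N+k))"
    by (rule mult_adj_selQ[OF Kc1])
  have R1: "mat_adjoint (selP ?N (?N+q)) * ?Y = mat (?N+q) q (\<lambda>(i,k). if i < ?N then ?Y $$ (i,k) else 0)"
    by (rule adj_selP_mult[OF _ Yc]) simp
  have R2: "mat_adjoint (selQ ?N q) * ?D = mat (?N+q) q (\<lambda>(i,k). if ?N \<le> i then ?D $$ (i-?N,k) else 0)"
    by (rule adj_selQ_mult[OF Dc])
  have q0: "0 < q" using q by simp
  show ?thesis unfolding LHS R1 R2
  proof (rule eq_matI)
    fix i k assume ik: "i < dim_row (mat (?N+q) q (\<lambda>(i,k). if i < ?N then ?Y $$ (i,k) else 0)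
         + mat (?N+q) q (\<lambda>(i,k). if ?N \<le> i then ?D $$ (i-?N,k) else 0))"
      "k < dim_col (mat (?N+q) q (\<lambda>(i,k). if i < ?N then ?Y $$ (i,k) else 0)
         + mat (?N+q) q (\<lambda>(i,k). if ?N \<le> i then ?D $$ (i-?N,k) else 0))"
    then have i: "i < ?N + q" and k: "k < q" by simp_all
    have iS: "i < (Suc m + 1)*q" using i unfolding e1 .
    have kS: "?N + k < (Suc m + 1)*q" using k unfolding e1 by simp
    have kd: "(?N + k) div q = m+1" and km: "(?N+k) mod q = k" using divmod_last[of ?N "?N+k" q m] k by simp_all
    show "mat (?N+q) q (\<lambda>(i,k). K1 q b s (Suc m) $$ (i,?N+k)) $$ (i,k) =
      (mat (?N+q) q (\<lambda>(i,k). if i < ?N then ?Y $$ (i,k) else 0)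
         + mat (?N+q) q (\<lambda>(i,k). if ?N \<le> i then ?D $$ (i-?N,k) else 0)) $$ (i,k)"
    proof (cases "i < ?N")
      case True
      have e: "i div q + (m+1) = Suc m + i div q" by simp
      have kv: "K1 q b s (Suc m) $$ (i,?N+k) = (complex_of_real b \<cdot>\<^sub>m s (Suc m + i div q) - s (Suc m + i div q + 1)) $$ (i mod q, k)"
        unfolding K1_def using iS kS kd km by (simp add: add.commute[of "i div q" m])
      have yv: "?Y $$ (i,k) = (complex_of_real b \<cdot>\<^sub>m s (Suc m + i div q) - s (Suc m + i div q + 1)) $$ (i mod q, k)"
        unfolding Y1_def using True k by simp
      show ?thesis using True i k kv yv by simp
    next
      case False
      then have Ni: "?N \<le> i" by simp
      have d: "i div q = m+1" and md: "i mod q = i - ?N" using divmod_last[OF Ni i refl] by simp_all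
      have e: "i div q + (?N+k) div q = 2 * Suc m" using d kd by simp
      have kv: "K1 q b s (Suc m) $$ (i,?N+k) = ?D $$ (i - ?N, k)"
        unfolding K1_def using iS kS kd km d md e by (simp add: mult_2)
      show ?thesis using i k False kv by simp
    qed
  qed simp_all
qed

lemma L4: assumes Ki: "minv (K1 q b s m) \<in> carrier_mat ((m+1)*q) ((m+1)*q)"
  shows "rowm q b s (Suc m) = - (mat_adjoint (Y1 q b s (Suc m)) * minv (K1 q b s m)) * selP ((m+1)*q) ((m+1)*q+q)
     + selQ ((m+1)*q) q"
proof -
  let ?N = "(m+1)*q"
  let ?A = "- (mat_adjoint (Y1 q b s (Suc m)) * minv (K1 q b s m))"
  have cA: "?A \<in> carrier_mat q ?N" using Ki Yc by auto
  have R1: "?A * selP ?N (?N+q) = mat q (?N+q) (\<lambda>(i,k). if k < ?N then ?A $$ (i,k) else 0)"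
    by (rule mult_selP[OF _ cA]) simp
  have h: "rowm q b s (Suc m) = mat q (?N+q) (\<lambda>(r,c). if c < ?N then ?A $$ (r,c) else 1\<^sub>m q $$ (r, c - ?N))"
  proof -
    have d1: "dim_row ?A = q" "dim_col ?A = ?N" using cA by auto
    have d2: "Suc m - 1 = m" by simp
    show ?thesis unfolding rowm_def hcat_def d2 d1 by simp
  qed
  show ?thesis unfolding R1 h
    by (rule eq_matI) (auto simp: selQ_def)
qed

end

definition Am :: "nat \<Rightarrow> nat \<Rightarrow> complex \<Rightarrow> complex mat" where
  "Am q j w = 1\<^sub>m ((j+1)*q) - w \<cdot>\<^sub>m Tm q j"

lemma Am_carrier: "Am q j w \<in> carrier_mat ((j+1)*q) ((j+1)*q)"
  unfolding Am_def Tm_def by (intro minus_carrier_mat smult_carrier_mat) (rule blk_carrier)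

lemma Am_index: "i < (j+1)*q \<Longrightarrow> k < (j+1)*q \<Longrightarrow>
  Am q j w $$ (i,k) = (if i = k then 1 else 0) - w * (if i div q = k div q + 1 \<and> i mod q = k mod q then 1 else 0)"
proof -
  assume i: "i < (j+1)*q" and k: "k < (j+1)*q"
  have q0: "0 < q" using i by (cases q) auto
  have "i mod q < q" "k mod q < q" using q0 by simp_all
  then show ?thesis unfolding Am_def Tm_def using i k by auto
qed

lemma Am_det: "det (Am q j w) = 1"
proof -
  have c: "Am q j w \<in> carrier_mat ((j+1)*q) ((j+1)*q)" by (rule Am_carrier)
  have "det (Am q j w) = prod_list (diag_mat (Am q j w))"
  proof (rule det_lower_triangular[OF _ c])
    fix i k assume ik: "i < k" "k < (j+1)*q"
    have "i div q \<le> k div q" using ik by (simp add: div_le_mono)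
    then show "Am q j w $$ (i,k) = 0" using ik by (simp add: Am_index)
  qed
  also have "diag_mat (Am q j w) = map (\<lambda>i. 1) [0..<(j+1)*q]"
    unfolding diag_mat_def using c by (auto simp: Am_index)
  also have "prod_list (map (\<lambda>i. 1::complex) [0..<(j+1)*q]) = 1" by (simp add: map_replicate_const)
  finally show ?thesis .
qed

lemma Rm_spec: "Rm q j w \<in> carrier_mat ((j+1)*q) ((j+1)*q) \<and> Am q j w * Rm q j w = 1\<^sub>m ((j+1)*q)
   \<and> Rm q j w * Am q j w = 1\<^sub>m ((j+1)*q)"
proof -
  have "Rm q j w = minv (Am q j w)" unfolding Rm_def Am_def ..
  then show ?thesis using minv_spec[OF Am_carrier] Am_det by simp
qed

lemma L5: assumes q: "1 \<le> q"
  shows "selP ((m+1)*q) ((m+1)*q+q) * Am q (Suc m) w = Am q m w * selP ((m+1)*q) ((m+1)*q+q)"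
proof -
  let ?N = "(m+1)*q"
  have e1: "(Suc m + 1) * q = (m+1)*q + q" by (simp add: algebra_simps)
  have c1: "Am q (Suc m) w \<in> carrier_mat (?N+q) (?N+q)" using Am_carrier[of q "Suc m" w] unfolding e1 .
  have LHS: "selP ?N (?N+q) * Am q (Suc m) w = mat ?N (?N+q) (\<lambda>(i,k). Am q (Suc m) w $$ (i,k))"
    by (rule selP_mult[OF _ c1]) simp
  have RHS: "Am q m w * selP ?N (?N+q) = mat ?N (?N+q) (\<lambda>(i,k). if k < ?N then Am q m w $$ (i,k) else 0)"
    by (rule mult_selP[OF _ Am_carrier]) simp
  have q0: "0 < q" using q by simp
  show ?thesis unfolding LHS RHS
  proof (rule eq_matI)
    fix i k assume "i < dim_row (mat ?N (?N+q) (\<lambda>(i,k). if k < ?N then Am q m w $$ (i,k) else 0))"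
      "k < dim_col (mat ?N (?N+q) (\<lambda>(i,k). if k < ?N then Am q m w $$ (i,k) else 0))"
    then have i: "i < ?N" and k: "k < ?N + q" by simp_all
    have iS: "i < (Suc m + 1)*q" and kS: "k < (Suc m + 1)*q" using i k unfolding e1 by simp_all
    show "mat ?N (?N+q) (\<lambda>(i,k). Am q (Suc m) w $$ (i,k)) $$ (i,k) =
      mat ?N (?N+q) (\<lambda>(i,k). if k < ?N then Am q m w $$ (i,k) else 0) $$ (i,k)"
    proof (cases "k < ?N")
      case True
      then show ?thesis using i k iS kS by (simp add: Am_index)
    next
      case False
      have "i div q \<le> m" by (rule div_lt[OF i])
      moreover have "m+1 \<le> k div q" using False q0 by (intro div_ge) simp_all
      ultimately show ?thesis using i k iS kS False by (simp add: Am_index)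
    qed
  qed simp_all
qed

lemma L6: assumes q: "1 \<le> q"
  shows "selP ((m+1)*q) ((m+1)*q+q) * Rm q (Suc m) w = Rm q m w * selP ((m+1)*q) ((m+1)*q+q)"
proof -
  let ?N = "(m+1)*q"
  let ?P = "selP ?N (?N+q)"
  have e1: "(Suc m + 1) * q = (m+1)*q + q" by (simp add: algebra_simps)
  have c1: "Am q (Suc m) w \<in> carrier_mat (?N+q) (?N+q)" using Am_carrier[of q "Suc m" w] unfolding e1 .
  have s1: "Rm q (Suc m) w \<in> carrier_mat (?N+q) (?N+q)" "Am q (Suc m) w * Rm q (Suc m) w = 1\<^sub>m (?N+q)"
    using Rm_spec[of q "Suc m" w] unfolding e1 by auto
  have s0: "Rm q m w \<in> carrier_mat ?N ?N" "Rm q m w * Am q m w = 1\<^sub>m ?N" using Rm_spec[of q m w] by auto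
  have c0: "Am q m w \<in> carrier_mat ?N ?N" by (rule Am_carrier)
  have cP: "?P \<in> carrier_mat ?N (?N+q)" by simp
  have cR1: "Rm q (Suc m) w \<in> carrier_mat (?N+q) (?N+q)" by (rule s1(1))
  have cR0: "Rm q m w \<in> carrier_mat ?N ?N" by (rule s0(1))
  have "Rm q m w * ?P = (Rm q m w * ?P) * 1\<^sub>m (?N+q)"
    by (metis cR0 cP mult_carrier_mat right_mult_one_mat)
  also have "\<dots> = (Rm q m w * ?P) * (Am q (Suc m) w * Rm q (Suc m) w)" by (simp only: s1(2))
  also have "\<dots> = ((Rm q m w * ?P) * Am q (Suc m) w) * Rm q (Suc m) w"
    by (rule assoc_mult_mat[symmetric, OF mult_carrier_mat[OF cR0 cP] c1 cR1])
  also have "(Rm q m w * ?P) * Am q (Suc m) w = Rm q m w * (?P * Am q (Suc m) w)"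
    by (rule assoc_mult_mat[OF cR0 cP c1])
  also have "?P * Am q (Suc m) w = Am q m w * ?P" by (rule L5[OF q])
  also have "Rm q m w * (Am q m w * ?P) = (Rm q m w * Am q m w) * ?P"
    by (rule assoc_mult_mat[symmetric, OF cR0 c0 cP])
  also have "Rm q m w * Am q m w = 1\<^sub>m ?N" by (rule s0(2))
  also have "1\<^sub>m ?N * ?P = ?P" by (rule left_mult_one_mat[OF cP])
  finally show ?thesis by simp
qed

lemma L7u: "selP ((m+1)*q) ((m+1)*q+q) * u1 q b s (Suc m) = u1 q b s m"
proof -
  let ?N = "(m+1)*q"
  have e1: "(Suc m + 1) * q = (m+1)*q + q" by (simp add: algebra_simps)
  have c1: "u1 q b s (Suc m) \<in> carrier_mat (?N+q) q" unfolding u1_def e1[symmetric]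
    using blk_carrier[of q "Suc m + 1" 1] by simp
  have h: "selP ?N (?N+q) * u1 q b s (Suc m) = mat ?N q (\<lambda>(i,k). u1 q b s (Suc m) $$ (i,k))"
    by (rule selP_mult[OF _ c1]) simp
  show ?thesis unfolding h
  proof (rule eq_matI)
    fix i k assume "i < dim_row (u1 q b s m)" "k < dim_col (u1 q b s m)"
    then have i: "i < ?N" and k: "k < q" by (simp_all add: u1_def)
    have iS: "i < (Suc m + 1)*q" using i unfolding e1 by simp
    show "mat ?N q (\<lambda>(i,k). u1 q b s (Suc m) $$ (i,k)) $$ (i,k) = u1 q b s m $$ (i,k)"
      using i k iS by (simp add: u1_def)
  qed (simp_all add: u1_def)
qed

lemma L7v: "selP ((m+1)*q) ((m+1)*q+q) * vm q (Suc m) = vm q m"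
proof -
  let ?N = "(m+1)*q"
  have e1: "(Suc m + 1) * q = (m+1)*q + q" by (simp add: algebra_simps)
  have c1: "vm q (Suc m) \<in> carrier_mat (?N+q) q" unfolding vm_def e1[symmetric]
    using blk_carrier[of q "Suc m + 1" 1] by simp
  have h: "selP ?N (?N+q) * vm q (Suc m) = mat ?N q (\<lambda>(i,k). vm q (Suc m) $$ (i,k))"
    by (rule selP_mult[OF _ c1]) simp
  show ?thesis unfolding h
  proof (rule eq_matI)
    fix i k assume "i < dim_row (vm q m)" "k < dim_col (vm q m)"
    then have i: "i < ?N" and k: "k < q" by (simp_all add: vm_def)
    have iS: "i < (Suc m + 1)*q" using i unfolding e1 by simp
    show "mat ?N q (\<lambda>(i,k). vm q (Suc m) $$ (i,k)) $$ (i,k) = vm q m $$ (i,k)"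
      using i k iS by (simp add: vm_def)
  qed (simp_all add: vm_def)
qed


lemma ent_addsub: fixes A B C :: "complex mat"
  assumes "A \<in> carrier_mat n m" "B \<in> carrier_mat n m" "C \<in> carrier_mat n m"
  shows "(A + B) - (A + C) = B - C"
proof -
  have d: "dim_row A = n" "dim_col A = m" "dim_row B = n" "dim_col B = m" "dim_row C = n" "dim_col C = m"
    using assms by (simp_all only: carrier_matD)
  show ?thesis by (rule eq_matI) (simp_all add: d)
qed

lemma ent_addcancel: fixes A B C :: "complex mat"
  assumes "A \<in> carrier_mat n m" "B \<in> carrier_mat n m" "C \<in> carrier_mat n m"
  shows "(A + B) + (C - B) = A + C"
proof -
  have d: "dim_row A = n" "dim_col A = m" "dim_row B = n" "dim_col B = m" "dim_row C = n" "dim_col C = m"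
    using assms by (simp_all only: carrier_matD)
  show ?thesis by (rule eq_matI) (simp_all add: d)
qed

lemma ent_minus_zero: fixes A :: "complex mat"
  assumes "A \<in> carrier_mat n m"
  shows "A - 0\<^sub>m n m = A"
proof -
  have d: "dim_row A = n" "dim_col A = m" using assms by (simp_all only: carrier_matD)
  show ?thesis by (rule eq_matI) (simp_all add: d)
qed

lemma assoc5: fixes A B C D E :: "complex mat"
  assumes A: "A \<in> carrier_mat a b" and B: "B \<in> carrier_mat b c" and C: "C \<in> carrier_mat c d"
    and D: "D \<in> carrier_mat d e" and E: "E \<in> carrier_mat e f"
  shows "A * (B * C * D) * E = A * B * C * (D * E)"
proof -
  have CD: "C * D \<in> carrier_mat c e" using C D by simp
  have "B * C * D = B * (C * D)" by (rule assoc_mult_mat[OF B C D])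
  then have "A * (B * C * D) = (A * B) * (C * D)" using assoc_mult_mat[OF A B CD] by simp
  then have "A * (B * C * D) * E = ((A * B) * (C * D)) * E" by simp
  also have "\<dots> = (A * B) * ((C * D) * E)" by (rule assoc_mult_mat[OF mult_carrier_mat[OF A B] CD E])
  also have "(C * D) * E = C * (D * E)" by (rule assoc_mult_mat[OF C D E])
  also have "(A * B) * (C * (D * E)) = (A * B) * C * (D * E)"
    by (rule assoc_mult_mat[symmetric, OF mult_carrier_mat[OF A B] C mult_carrier_mat[OF D E]])
  finally show ?thesis .
qed

lemma block_inv_alg:
  fixes K Ki Y Ya D H Hi Kj P Q Pa Qa W Wa :: "complex mat"
  assumes cK: "K \<in> carrier_mat N N" and cKi: "Ki \<in> carrier_mat N N"
    and cY: "Y \<in> carrier_mat N q" and cYa: "Ya \<in> carrier_mat q N"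
    and cD: "D \<in> carrier_mat q q" and cH: "H \<in> carrier_mat q q" and cHi: "Hi \<in> carrier_mat q q"
    and cKj: "Kj \<in> carrier_mat M M" and cP: "P \<in> carrier_mat N M" and cQ: "Q \<in> carrier_mat q M"
    and cPa: "Pa \<in> carrier_mat M N" and cQa: "Qa \<in> carrier_mat M q"
    and KKi: "K * Ki = 1\<^sub>m N" and HHi: "H * Hi = 1\<^sub>m q"
    and L1: "Kj * Pa = Pa * K + Qa * Ya" and L2: "Kj * Qa = Pa * Y + Qa * D"
    and Hdef: "H = D - Ya * Ki * Y" and Wdef: "W = Q - Ya * Ki * P" and Wa: "Wa = Qa - Pa * (Ki * Y)"
    and PQ: "Pa * P + Qa * Q = 1\<^sub>m M"
  shows "Kj * Wa = Qa * H" "Kj * (Pa * Ki * P + Wa * Hi * W) = 1\<^sub>m M"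
proof -
  have cKiY: "Ki * Y \<in> carrier_mat N q" using cKi cY by simp
  have cPKiY: "Pa * (Ki * Y) \<in> carrier_mat M q" using cPa cKiY by simp
  have cYKiY: "Ya * Ki * Y \<in> carrier_mat q q" using cYa cKi cY by simp
  have cWa: "Wa \<in> carrier_mat M q" unfolding Wa using cPKiY by (rule minus_carrier_mat)
  have cYKiP: "Ya * Ki * P \<in> carrier_mat q M" using cYa cKi cP by simp
  have cW: "W \<in> carrier_mat q M" unfolding Wdef using cYKiP by (rule minus_carrier_mat)
  have e1: "Kj * (Pa * (Ki * Y)) = Pa * Y + Qa * (Ya * Ki * Y)"
  proof -
    have "Kj * (Pa * (Ki * Y)) = (Kj * Pa) * (Ki * Y)" by (rule assoc_mult_mat[symmetric, OF cKj cPa cKiY])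
    also have "\<dots> = (Pa * K + Qa * Ya) * (Ki * Y)" by (simp only: L1)
    also have "\<dots> = (Pa * K) * (Ki * Y) + (Qa * Ya) * (Ki * Y)"
      by (rule add_mult_distrib_mat[OF mult_carrier_mat[OF cPa cK] mult_carrier_mat[OF cQa cYa] cKiY])
    also have "(Pa * K) * (Ki * Y) = Pa * ((K * Ki) * Y)"
      using assoc_mult_mat[OF cPa cK cKiY] assoc_mult_mat[OF cK cKi cY] by simp
    also have "(K * Ki) * Y = Y" using KKi left_mult_one_mat[OF cY] by simp
    also have "(Qa * Ya) * (Ki * Y) = Qa * (Ya * Ki * Y)"
      using assoc_mult_mat[OF cQa cYa cKiY] assoc_mult_mat[OF cYa cKi cY] by simp
    finally show ?thesis .
  qed
  show I1: "Kj * Wa = Qa * H"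
  proof -
    have "Kj * Wa = Kj * Qa - Kj * (Pa * (Ki * Y))" unfolding Wa by (rule mult_minus_distrib_mat[OF cKj cQa cPKiY])
    also have "\<dots> = (Pa * Y + Qa * D) - (Pa * Y + Qa * (Ya * Ki * Y))" by (simp only: e1 L2)
    also have "\<dots> = Qa * D - Qa * (Ya * Ki * Y)"
      by (rule ent_addsub[OF mult_carrier_mat[OF cPa cY] mult_carrier_mat[OF cQa cD] mult_carrier_mat[OF cQa cYKiY]])
    also have "\<dots> = Qa * H" unfolding Hdef by (rule mult_minus_distrib_mat[symmetric, OF cQa cD cYKiY])
    finally show ?thesis .
  qed
  have cPKiP: "Pa * Ki * P \<in> carrier_mat M M" using cPa cKi cP by simp
  have cWHiW: "Wa * Hi * W \<in> carrier_mat M M" using cWa cHi cW by simp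
  have e2: "Kj * (Pa * Ki * P) = Pa * P + Qa * (Ya * Ki * P)"
  proof -
    have "Kj * (Pa * Ki * P) = ((Kj * Pa) * Ki) * P"
      using assoc_mult_mat[OF cPa cKi cP] assoc_mult_mat[OF cKj cPa mult_carrier_mat[OF cKi cP]]
        assoc_mult_mat[OF mult_carrier_mat[OF cKj cPa] cKi cP] by simp
    also have "\<dots> = ((Pa * K + Qa * Ya) * Ki) * P" by (simp only: L1)
    also have "(Pa * K + Qa * Ya) * Ki = (Pa * K) * Ki + (Qa * Ya) * Ki"
      by (rule add_mult_distrib_mat[OF mult_carrier_mat[OF cPa cK] mult_carrier_mat[OF cQa cYa] cKi])
    also have "(Pa * K) * Ki = Pa" using assoc_mult_mat[OF cPa cK cKi] KKi right_mult_one_mat[OF cPa] by simp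
    also have "(Pa + (Qa * Ya) * Ki) * P = Pa * P + ((Qa * Ya) * Ki) * P"
      by (rule add_mult_distrib_mat[OF cPa mult_carrier_mat[OF mult_carrier_mat[OF cQa cYa] cKi] cP])
    also have "((Qa * Ya) * Ki) * P = Qa * (Ya * Ki * P)"
      using assoc_mult_mat[OF cQa cYa cKi] assoc_mult_mat[OF cQa mult_carrier_mat[OF cYa cKi] cP] by simp
    finally show ?thesis .
  qed
  have e3: "Kj * (Wa * Hi * W) = Qa * Q - Qa * (Ya * Ki * P)"
  proof -
    have "Kj * (Wa * Hi * W) = ((Kj * Wa) * Hi) * W"
      using assoc_mult_mat[OF cWa cHi cW] assoc_mult_mat[OF cKj cWa mult_carrier_mat[OF cHi cW]]
        assoc_mult_mat[OF mult_carrier_mat[OF cKj cWa] cHi cW] by simp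
    also have "\<dots> = ((Qa * H) * Hi) * W" by (simp only: I1)
    also have "(Qa * H) * Hi = Qa" using assoc_mult_mat[OF cQa cH cHi] HHi right_mult_one_mat[OF cQa] by simp
    also have "Qa * W = Qa * Q - Qa * (Ya * Ki * P)" unfolding Wdef by (rule mult_minus_distrib_mat[OF cQa cQ cYKiP])
    finally show ?thesis .
  qed
  show "Kj * (Pa * Ki * P + Wa * Hi * W) = 1\<^sub>m M"
  proof -
    have "Kj * (Pa * Ki * P + Wa * Hi * W) = Kj * (Pa * Ki * P) + Kj * (Wa * Hi * W)"
      by (rule mult_add_distrib_mat[OF cKj cPKiP cWHiW])
    also have "\<dots> = (Pa * P + Qa * (Ya * Ki * P)) + (Qa * Q - Qa * (Ya * Ki * P))" by (simp only: e2 e3)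
    also have "\<dots> = Pa * P + Qa * Q" by (rule ent_addcancel[OF mult_carrier_mat[OF cPa cP] mult_carrier_mat[OF cQa cYKiP] mult_carrier_mat[OF cQa cQ]])
    also have "\<dots> = 1\<^sub>m M" by (rule PQ)
    finally show ?thesis .
  qed
qed

lemma final_alg:
  fixes P W Ki Hi Lz La :: "complex mat"
  assumes cP: "P \<in> carrier_mat N M" and cW: "W \<in> carrier_mat q M" and cKi: "Ki \<in> carrier_mat N N"
    and cHi: "Hi \<in> carrier_mat q q" and cLz: "Lz \<in> carrier_mat M r" and cLa: "La \<in> carrier_mat M t"
  shows "mat_adjoint Lz * (mat_adjoint P * Ki * P + mat_adjoint W * Hi * W) * La
     = mat_adjoint (P * Lz) * Ki * (P * La) + mat_adjoint (W * Lz) * Hi * (W * La)"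
proof -
  have cPa: "mat_adjoint P \<in> carrier_mat M N" using cP by simp
  have cWa: "mat_adjoint W \<in> carrier_mat M q" using cW by simp
  have cLza: "mat_adjoint Lz \<in> carrier_mat r M" using cLz by simp
  have c1: "mat_adjoint P * Ki * P \<in> carrier_mat M M" using mult_carrier_mat[OF mult_carrier_mat[OF cPa cKi] cP] .
  have c2: "mat_adjoint W * Hi * W \<in> carrier_mat M M" using mult_carrier_mat[OF mult_carrier_mat[OF cWa cHi] cW] .
  have "mat_adjoint Lz * (mat_adjoint P * Ki * P + mat_adjoint W * Hi * W)
      = mat_adjoint Lz * (mat_adjoint P * Ki * P) + mat_adjoint Lz * (mat_adjoint W * Hi * W)"
    by (rule mult_add_distrib_mat[OF cLza c1 c2])
  then have "mat_adjoint Lz * (mat_adjoint P * Ki * P + mat_adjoint W * Hi * W) * La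
      = (mat_adjoint Lz * (mat_adjoint P * Ki * P) + mat_adjoint Lz * (mat_adjoint W * Hi * W)) * La" by simp
  also have "\<dots> = mat_adjoint Lz * (mat_adjoint P * Ki * P) * La + mat_adjoint Lz * (mat_adjoint W * Hi * W) * La"
    by (rule add_mult_distrib_mat[OF mult_carrier_mat[OF cLza c1] mult_carrier_mat[OF cLza c2] cLa])
  also have "mat_adjoint Lz * (mat_adjoint P * Ki * P) * La = mat_adjoint Lz * mat_adjoint P * Ki * (P * La)"
    by (rule assoc5[OF cLza cPa cKi cP cLa])
  also have "mat_adjoint Lz * mat_adjoint P = mat_adjoint (P * Lz)" by (rule adj_mult[symmetric, OF cP cLz])
  also have "mat_adjoint Lz * (mat_adjoint W * Hi * W) * La = mat_adjoint Lz * mat_adjoint W * Hi * (W * La)"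
    by (rule assoc5[OF cLza cWa cHi cW cLa])
  also have "mat_adjoint Lz * mat_adjoint W = mat_adjoint (W * Lz)" by (rule adj_mult[symmetric, OF cW cLz])
  finally show ?thesis .
qed


lemma mat_vec_zero: fixes A :: "complex mat"
  assumes "A \<in> carrier_mat n m" shows "A *\<^sub>v 0\<^sub>v m = 0\<^sub>v n"
proof -
  have d: "dim_row A = n" "dim_col A = m" using assms by (simp_all only: carrier_matD)
  show ?thesis by (rule eq_vecI) (simp_all add: d scalar_prod_def)
qed

lemma K_restrict_inj:
  assumes pd: "pos_def_mat (K1 q b s n)" and mn: "m \<le> n" and v: "v \<in> carrier_vec ((m+1)*q)"
    and Kv: "K1 q b s m *\<^sub>v v = 0\<^sub>v ((m+1)*q)"
  shows "v = 0\<^sub>v ((m+1)*q)"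
proof (rule ccontr)
  assume nz: "v \<noteq> 0\<^sub>v ((m+1)*q)"
  let ?A = "(m+1)*q" and ?B = "(n+1)*q"
  have AB: "?A \<le> ?B" using mn by (simp add: mult_le_mono1)
  define y where "y = vec ?B (\<lambda>i. if i < ?A then v $ i else (0::complex))"
  have dv: "dim_vec v = ?A" using v by (simp only: carrier_vecD)
  have yc: "y \<in> carrier_vec ?B" unfolding y_def by simp
  obtain i where i: "i < ?A" and vi: "v $ i \<noteq> 0"
  proof -
    have "\<exists>i < ?A. v $ i \<noteq> 0"
    proof (rule ccontr)
      assume "\<not> (\<exists>i < ?A. v $ i \<noteq> 0)"
      then have "v = 0\<^sub>v ?A" by (intro eq_vecI) (simp_all add: dv)
      with nz show False by simp
    qed
    then show ?thesis using that by blast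
  qed
  have ynz: "y \<noteq> 0\<^sub>v ?B"
  proof
    assume "y = 0\<^sub>v ?B"
    have iB: "i < ?B" using i AB by (rule less_le_trans)
    from \<open>y = 0\<^sub>v ?B\<close> have "y $ i = 0" using iB by simp
    then show False using i iB vi unfolding y_def by simp
  qed
  have cKn: "K1 q b s n \<in> carrier_mat ?B ?B" unfolding K1_def by (rule blk_carrier)
  have cKm: "K1 q b s m \<in> carrier_mat ?A ?A" unfolding K1_def by (rule blk_carrier)
  have Ky: "(K1 q b s n *\<^sub>v y) $ i = 0" if ii: "i < ?A" for i
  proof -
    have iB: "i < ?B" using ii AB by (rule less_le_trans)
    have "(K1 q b s n *\<^sub>v y) $ i = (\<Sum>k\<in>{0..<?B}. K1 q b s n $$ (i,k) * y $ k)"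
      using iB cKn yc by (simp add: scalar_prod_def)
    also have "\<dots> = (\<Sum>k\<in>{0..<?A}. K1 q b s n $$ (i,k) * y $ k)"
      by (rule sum.mono_neutral_right) (use AB in \<open>auto simp: y_def\<close>)
    also have "\<dots> = (\<Sum>k\<in>{0..<?A}. K1 q b s m $$ (i,k) * v $ k)"
    proof (rule sum.cong)
      fix k assume "k \<in> {0..<?A}"
      then have k: "k < ?A" by simp
      then have kB: "k < ?B" using AB by (rule less_le_trans)
      show "K1 q b s n $$ (i,k) * y $ k = K1 q b s m $$ (i,k) * v $ k"
        using k kB ii iB unfolding K1_def y_def by simp
    qed simp
    also have "\<dots> = (K1 q b s m *\<^sub>v v) $ i"
      using ii cKm v by (simp add: scalar_prod_def dv)
    also have "\<dots> = 0" using Kv ii by simp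
    finally show ?thesis .
  qed
  have "(K1 q b s n *\<^sub>v y) \<bullet>c y = (\<Sum>i\<in>{0..<?B}. (K1 q b s n *\<^sub>v y) $ i * conjugate y $ i)"
    using yc by (simp add: scalar_prod_def)
  also have "\<dots> = 0"
  proof (rule sum.neutral, intro ballI)
    fix k assume "k \<in> {0..<?B}"
    then have k: "k < ?B" by simp
    show "(K1 q b s n *\<^sub>v y) $ k * conjugate y $ k = 0"
    proof (cases "k < ?A")
      case True then show ?thesis using Ky by simp
    next
      case False then show ?thesis using k unfolding y_def by simp
    qed
  qed
  finally have z: "(K1 q b s n *\<^sub>v y) \<bullet>c y = 0" .
  have "0 < Re ((K1 q b s n *\<^sub>v y) \<bullet>c y)"
    using pd ynz yc cKn unfolding pos_def_mat_def by (simp add: carrier_matD)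
  with z show False by simp
qed

lemma E_gen:
  fixes P W Ki Hi Rz1 Ra1 Rz0 Ra0 X1 Z1 :: "complex mat"
  assumes cP: "P \<in> carrier_mat N M" and cW: "W \<in> carrier_mat q M" and cKi: "Ki \<in> carrier_mat N N"
    and cHi: "Hi \<in> carrier_mat q q" and cRz1: "Rz1 \<in> carrier_mat M M" and cRa1: "Ra1 \<in> carrier_mat M M"
    and cRz0: "Rz0 \<in> carrier_mat N N" and cRa0: "Ra0 \<in> carrier_mat N N"
    and cX1: "X1 \<in> carrier_mat M r" and cZ1: "Z1 \<in> carrier_mat M t"
    and hz: "P * Rz1 = Rz0 * P" and ha: "P * Ra1 = Ra0 * P"
  shows "mat_adjoint X1 * mat_adjoint Rz1 * (mat_adjoint P * Ki * P + mat_adjoint W * Hi * W) * Ra1 * Z1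
    = mat_adjoint (P * X1) * mat_adjoint Rz0 * Ki * Ra0 * (P * Z1)
      + mat_adjoint (W * Rz1 * X1) * Hi * (W * Ra1 * Z1)"
proof -
  let ?G = "mat_adjoint P * Ki * P + mat_adjoint W * Hi * W"
  have cG: "?G \<in> carrier_mat M M"
    by (rule add_carrier_mat) (use mult_carrier_mat[OF mult_carrier_mat[OF adj_carrier[OF cW] cHi] cW] in simp)
  have cLz: "Rz1 * X1 \<in> carrier_mat M r" using cRz1 cX1 by simp
  have cLa: "Ra1 * Z1 \<in> carrier_mat M t" using cRa1 cZ1 by simp
  have cLza: "mat_adjoint (Rz1 * X1) \<in> carrier_mat r M" using cLz by simp
  have "mat_adjoint X1 * mat_adjoint Rz1 = mat_adjoint (Rz1 * X1)" by (rule adj_mult[symmetric, OF cRz1 cX1])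
  then have "mat_adjoint X1 * mat_adjoint Rz1 * ?G * Ra1 * Z1 = mat_adjoint (Rz1 * X1) * ?G * Ra1 * Z1" by simp
  also have "\<dots> = mat_adjoint (Rz1 * X1) * ?G * (Ra1 * Z1)"
    by (rule assoc_mult_mat[OF mult_carrier_mat[OF cLza cG] cRa1 cZ1])
  also have "\<dots> = mat_adjoint (P * (Rz1 * X1)) * Ki * (P * (Ra1 * Z1)) + mat_adjoint (W * (Rz1 * X1)) * Hi * (W * (Ra1 * Z1))"
    by (rule final_alg[OF cP cW cKi cHi cLz cLa])
  also have "P * (Rz1 * X1) = Rz0 * (P * X1)"
    using assoc_mult_mat[OF cP cRz1 cX1, symmetric] hz assoc_mult_mat[OF cRz0 cP cX1] by simp
  also have "P * (Ra1 * Z1) = Ra0 * (P * Z1)"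
    using assoc_mult_mat[OF cP cRa1 cZ1, symmetric] ha assoc_mult_mat[OF cRa0 cP cZ1] by simp
  also have "W * (Rz1 * X1) = W * Rz1 * X1" by (rule assoc_mult_mat[symmetric, OF cW cRz1 cX1])
  also have "W * (Ra1 * Z1) = W * Ra1 * Z1" by (rule assoc_mult_mat[symmetric, OF cW cRa1 cZ1])
  also have "mat_adjoint (Rz0 * (P * X1)) = mat_adjoint (P * X1) * mat_adjoint Rz0"
    by (rule adj_mult[OF cRz0 mult_carrier_mat[OF cP cX1]])
  also have "mat_adjoint (P * X1) * mat_adjoint Rz0 * Ki * (Ra0 * (P * Z1)) = mat_adjoint (P * X1) * mat_adjoint Rz0 * Ki * Ra0 * (P * Z1)"
    by (rule assoc_mult_mat[symmetric]) (rule mult_carrier_mat[OF mult_carrier_mat[OF adj_carrier[OF mult_carrier_mat[OF cP cX1]] adj_carrier[OF cRz0]] cKi], rule cRa0, rule mult_carrier_mat[OF cP cZ1])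
  finally show ?thesis .
qed

lemma comb_alpha: fixes A B :: "complex mat" assumes "A \<in> carrier_mat q q" "B \<in> carrier_mat q q"
  shows "1\<^sub>m q - c \<cdot>\<^sub>m (A + B) = (1\<^sub>m q - c \<cdot>\<^sub>m A) - c \<cdot>\<^sub>m B"
proof -
  have d: "dim_row A = q" "dim_col A = q" "dim_row B = q" "dim_col B = q" using assms by (simp_all only: carrier_matD)
  show ?thesis by (rule eq_matI) (simp_all add: d algebra_simps)
qed
lemma comb_beta: fixes A B :: "complex mat" assumes "A \<in> carrier_mat q q" "B \<in> carrier_mat q q"
  shows "c \<cdot>\<^sub>m (A + B) = c \<cdot>\<^sub>m A + c \<cdot>\<^sub>m B"
proof -
  have d: "dim_row A = q" "dim_col A = q" "dim_row B = q" "dim_col B = q" using assms by (simp_all only: carrier_matD)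
  show ?thesis by (rule eq_matI) (simp_all add: d algebra_simps)
qed
lemma comb_gamma: fixes A B :: "complex mat" assumes "A \<in> carrier_mat q q" "B \<in> carrier_mat q q"
  shows "- (c \<cdot>\<^sub>m (A + B)) = - (c \<cdot>\<^sub>m A) - c \<cdot>\<^sub>m B"
proof -
  have d: "dim_row A = q" "dim_col A = q" "dim_row B = q" "dim_col B = q" using assms by (simp_all only: carrier_matD)
  show ?thesis by (rule eq_matI) (simp_all add: d algebra_simps)
qed
lemma comb_delta: fixes A B :: "complex mat" assumes "A \<in> carrier_mat q q" "B \<in> carrier_mat q q"
  shows "1\<^sub>m q + c \<cdot>\<^sub>m (A + B) = (1\<^sub>m q + c \<cdot>\<^sub>m A) + c \<cdot>\<^sub>m B"
proof -
  have d: "dim_row A = q" "dim_col A = q" "dim_row B = q" "dim_col B = q" using assms by (simp_all only: carrier_matD)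
  show ?thesis by (rule eq_matI) (simp_all add: d algebra_simps)
qed

lemma ent_neg_add: fixes X Q :: "complex mat" assumes "X \<in> carrier_mat n m" "Q \<in> carrier_mat n m"
  shows "- X + Q = Q - X"
proof -
  have d: "dim_row X = n" "dim_col X = m" "dim_row Q = n" "dim_col Q = m" using assms by (simp_all only: carrier_matD)
  show ?thesis by (rule eq_matI) (simp_all add: d)
qed

lemma ent_one_minus_zero: "1\<^sub>m q - (0\<^sub>m q q :: complex mat) = 1\<^sub>m q"
  by (rule eq_matI) simp_all


lemma I1_alg:
  fixes K Ki Y Ya D H Kj P Q Pa Qa W Wa :: "complex mat"
  assumes cK: "K \<in> carrier_mat N N" and cKi: "Ki \<in> carrier_mat N N"
    and cY: "Y \<in> carrier_mat N q" and cYa: "Ya \<in> carrier_mat q N"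
    and cD: "D \<in> carrier_mat q q" and cH: "H \<in> carrier_mat q q"
    and cKj: "Kj \<in> carrier_mat M M" and cP: "P \<in> carrier_mat N M" and cQ: "Q \<in> carrier_mat q M"
    and cPa: "Pa \<in> carrier_mat M N" and cQa: "Qa \<in> carrier_mat M q"
    and KKi: "K * Ki = 1\<^sub>m N"
    and L1: "Kj * Pa = Pa * K + Qa * Ya" and L2: "Kj * Qa = Pa * Y + Qa * D"
    and Hdef: "H = D - Ya * Ki * Y" and Wdef: "W = Q - Ya * Ki * P" and Wa: "Wa = Qa - Pa * (Ki * Y)"
    and PQ: "Pa * P + Qa * Q = 1\<^sub>m M"
  shows "Kj * Wa = Qa * H"
proof -
  have cKiY: "Ki * Y \<in> carrier_mat N q" using cKi cY by simp
  have cPKiY: "Pa * (Ki * Y) \<in> carrier_mat M q" using cPa cKiY by simp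
  have cYKiY: "Ya * Ki * Y \<in> carrier_mat q q" using cYa cKi cY by simp
  have cWa: "Wa \<in> carrier_mat M q" unfolding Wa using cPKiY by (rule minus_carrier_mat)
  have cYKiP: "Ya * Ki * P \<in> carrier_mat q M" using cYa cKi cP by simp
  have cW: "W \<in> carrier_mat q M" unfolding Wdef using cYKiP by (rule minus_carrier_mat)
  have e1: "Kj * (Pa * (Ki * Y)) = Pa * Y + Qa * (Ya * Ki * Y)"
  proof -
    have "Kj * (Pa * (Ki * Y)) = (Kj * Pa) * (Ki * Y)" by (rule assoc_mult_mat[symmetric, OF cKj cPa cKiY])
    also have "\<dots> = (Pa * K + Qa * Ya) * (Ki * Y)" by (simp only: L1)
    also have "\<dots> = (Pa * K) * (Ki * Y) + (Qa * Ya) * (Ki * Y)"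
      by (rule add_mult_distrib_mat[OF mult_carrier_mat[OF cPa cK] mult_carrier_mat[OF cQa cYa] cKiY])
    also have "(Pa * K) * (Ki * Y) = Pa * ((K * Ki) * Y)"
      using assoc_mult_mat[OF cPa cK cKiY] assoc_mult_mat[OF cK cKi cY] by simp
    also have "(K * Ki) * Y = Y" using KKi left_mult_one_mat[OF cY] by simp
    also have "(Qa * Ya) * (Ki * Y) = Qa * (Ya * Ki * Y)"
      using assoc_mult_mat[OF cQa cYa cKiY] assoc_mult_mat[OF cYa cKi cY] by simp
    finally show ?thesis .
  qed
  show "Kj * Wa = Qa * H"
  proof -
    have "Kj * Wa = Kj * Qa - Kj * (Pa * (Ki * Y))" unfolding Wa by (rule mult_minus_distrib_mat[OF cKj cQa cPKiY])
    also have "\<dots> = (Pa * Y + Qa * D) - (Pa * Y + Qa * (Ya * Ki * Y))" by (simp only: e1 L2)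
    also have "\<dots> = Qa * D - Qa * (Ya * Ki * Y)"
      by (rule ent_addsub[OF mult_carrier_mat[OF cPa cY] mult_carrier_mat[OF cQa cD] mult_carrier_mat[OF cQa cYKiY]])
    also have "\<dots> = Qa * H" unfolding Hdef by (rule mult_minus_distrib_mat[symmetric, OF cQa cD cYKiY])
    finally show ?thesis .
  qed
qed


lemma main_m:
  fixes q m :: nat and a b :: real and s :: "nat \<Rightarrow> complex mat" and z :: complex
  assumes q: "1 \<le> q"
    and sH: "\<And>i. i \<le> 2*(m+1)+1 \<Longrightarrow> s i \<in> carrier_mat q q \<and> hermitian_mat (s i)"
    and inj0: "\<And>v. v \<in> carrier_vec ((m+1)*q) \<Longrightarrow> K1 q b s m *\<^sub>v v = 0\<^sub>v ((m+1)*q) \<Longrightarrow> v = 0\<^sub>v ((m+1)*q)"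
    and inj1: "\<And>v. v \<in> carrier_vec ((Suc m+1)*q) \<Longrightarrow> K1 q b s (Suc m) *\<^sub>v v = 0\<^sub>v ((Suc m+1)*q) \<Longrightarrow> v = 0\<^sub>v ((Suc m+1)*q)"
  shows "alpha2 q a b s (Suc m) z = alpha2 q a b s m z
            - (z - complex_of_real a) \<cdot>\<^sub>m (mat_adjoint (Theta1 q b s (Suc m) (cnj z))
                 * minv (Khat1 q b s (Suc m)) * Gamma1 q b s (Suc m) (complex_of_real a))
    \<and> beta2 q a b s (Suc m) z = beta2 q a b s m z
            + (z - complex_of_real a) \<cdot>\<^sub>m (mat_adjoint (Theta1 q b s (Suc m) (cnj z))
                 * minv (Khat1 q b s (Suc m)) * Theta1 q b s (Suc m) (complex_of_real a))
    \<and> gamma2 q a b s (Suc m) z = gamma2 q a b s m z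
            - (z - complex_of_real a) \<cdot>\<^sub>m (mat_adjoint (Gamma1 q b s (Suc m) (cnj z))
                 * minv (Khat1 q b s (Suc m)) * Gamma1 q b s (Suc m) (complex_of_real a))
    \<and> delta2 q a b s (Suc m) z = delta2 q a b s m z
            + (z - complex_of_real a) \<cdot>\<^sub>m (mat_adjoint (Gamma1 q b s (Suc m) (cnj z))
                 * minv (Khat1 q b s (Suc m)) * Theta1 q b s (Suc m) (complex_of_real a))"
proof -
  define N where "N = (m+1)*q"
  have e1: "(Suc m + 1) * q = N + q" unfolding N_def by (simp add: algebra_simps)
  define K where "K = K1 q b s m"
  define Kj where "Kj = K1 q b s (Suc m)"
  define Y where "Y = Y1 q b s (Suc m)"
  define D where "D = complex_of_real b \<cdot>\<^sub>m s (2*Suc m) - s (2*Suc m+1)"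
  define Ki where "Ki = minv K"
  define P where "P = selP N (N+q)"
  define Q where "Q = selQ N q"
  have cK: "K \<in> carrier_mat N N" unfolding K_def N_def by (rule Kc0[OF q sH])
  have cKj: "Kj \<in> carrier_mat (N+q) (N+q)" unfolding Kj_def N_def by (rule Kc1[OF q sH])
  have cY: "Y \<in> carrier_mat N q" unfolding Y_def N_def by (rule Yc[OF q sH])
  have cYa: "mat_adjoint Y \<in> carrier_mat q N" using cY by simp
  have cD: "D \<in> carrier_mat q q" unfolding D_def by (rule Dc[OF q sH])
  have cP: "P \<in> carrier_mat N (N+q)" unfolding P_def by simp
  have cQ: "Q \<in> carrier_mat q (N+q)" unfolding Q_def by simp
  have cPa: "mat_adjoint P \<in> carrier_mat (N+q) N" using cP by simp
  have cQa: "mat_adjoint Q \<in> carrier_mat (N+q) q" using cQ by simp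
  have detK: "det K \<noteq> 0" by (rule inj_det[OF cK]) (use inj0 in \<open>simp add: K_def N_def\<close>)
  have sK: "Ki \<in> carrier_mat N N" "K * Ki = 1\<^sub>m N" "Ki * K = 1\<^sub>m N"
    using minv_spec[OF cK detK] unfolding Ki_def by auto
  have Kh: "mat_adjoint K = K" unfolding K_def by (rule K_herm[OF q sH])
  have Kih: "mat_adjoint Ki = Ki"
  proof -
    have "K * mat_adjoint Ki = mat_adjoint (Ki * K)" using adj_mult[OF sK(1) cK] Kh by simp
    also have "\<dots> = 1\<^sub>m N" using sK(3) by simp
    finally have "minv K = mat_adjoint Ki" by (rule minv_unique[OF cK adj_carrier[OF sK(1)]])
    then show ?thesis unfolding Ki_def by simp
  qed
  have L1': "Kj * mat_adjoint P = mat_adjoint P * K + mat_adjoint Q * mat_adjoint Y"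
    unfolding Kj_def P_def Q_def K_def Y_def N_def by (rule L1[OF q sH])
  have L2': "Kj * mat_adjoint Q = mat_adjoint P * Y + mat_adjoint Q * D"
    unfolding Kj_def P_def Q_def D_def Y_def N_def by (rule L2[OF q sH])
  define H where "H = Khat1 q b s (Suc m)"
  have Hdef: "H = D - mat_adjoint Y * Ki * Y" unfolding H_def Khat1_def D_def Y_def Ki_def K_def by simp
  have cYKiY: "mat_adjoint Y * Ki * Y \<in> carrier_mat q q" using mult_carrier_mat[OF mult_carrier_mat[OF cYa sK(1)] cY] .
  have cH: "H \<in> carrier_mat q q" unfolding Hdef using cYKiY by (rule minus_carrier_mat)
  define W where "W = rowm q b s (Suc m)"
  have cYKiP: "mat_adjoint Y * Ki * P \<in> carrier_mat q (N+q)" using mult_carrier_mat[OF mult_carrier_mat[OF cYa sK(1)] cP] .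
  have Wdef: "W = Q - mat_adjoint Y * Ki * P"
  proof -
    have "W = - (mat_adjoint Y * Ki) * P + Q"
      unfolding W_def Y_def Ki_def K_def P_def Q_def N_def
      by (rule L4[OF q sH sK(1)[unfolded Ki_def K_def N_def]])
    also have "- (mat_adjoint Y * Ki) * P = - (mat_adjoint Y * Ki * P)"
      by (rule uminus_mult_left_mat) (simp add: carrier_matD(2)[OF sK(1)] carrier_matD(1)[OF cP])
    also have "- (mat_adjoint Y * Ki * P) + Q = Q - mat_adjoint Y * Ki * P" by (rule ent_neg_add[OF cYKiP cQ])
    finally show ?thesis .
  qed
  have cW: "W \<in> carrier_mat q (N+q)" unfolding Wdef using cYKiP by (rule minus_carrier_mat)
  have cKiY: "Ki * Y \<in> carrier_mat N q" using mult_carrier_mat[OF sK(1) cY] .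
  have Wa: "mat_adjoint W = mat_adjoint Q - mat_adjoint P * (Ki * Y)"
  proof -
    have "mat_adjoint W = mat_adjoint Q - mat_adjoint (mat_adjoint Y * Ki * P)"
      unfolding Wdef by (rule adj_minus[OF cQ cYKiP])
    also have "mat_adjoint (mat_adjoint Y * Ki * P) = mat_adjoint P * mat_adjoint (mat_adjoint Y * Ki)"
      by (rule adj_mult[OF mult_carrier_mat[OF cYa sK(1)] cP])
    also have "mat_adjoint (mat_adjoint Y * Ki) = mat_adjoint Ki * mat_adjoint (mat_adjoint Y)"
      by (rule adj_mult[OF cYa sK(1)])
    also have "mat_adjoint Ki * mat_adjoint (mat_adjoint Y) = Ki * Y" using Kih by simp
    finally show ?thesis .
  qed
  have PQ: "mat_adjoint P * P + mat_adjoint Q * Q = 1\<^sub>m (N+q)"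
  proof -
    have h1: "mat_adjoint P * P = mat (N+q) (N+q) (\<lambda>(i,k). if i < N then P $$ (i,k) else 0)"
      unfolding P_def by (rule adj_selP_mult[OF _ selP_carrier]) simp
    have h2: "mat_adjoint Q * Q = mat (N+q) (N+q) (\<lambda>(i,k). if N \<le> i then Q $$ (i-N,k) else 0)"
      unfolding Q_def by (rule adj_selQ_mult[OF selQ_carrier])
    show ?thesis unfolding h1 h2
      by (rule eq_matI) (auto simp: P_def Q_def selP_def selQ_def)
  qed
  have I1: "Kj * mat_adjoint W = mat_adjoint Q * H"
    by (rule I1_alg[OF cK sK(1) cY cYa cD cH cKj cP cQ cPa cQa sK(2) L1' L2' Hdef Wdef Wa PQ])
  have QQa: "Q * mat_adjoint Q = 1\<^sub>m q"
  proof -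
    have h: "Q * mat_adjoint Q = mat q q (\<lambda>(i,k). Q $$ (i, N+k))"
      unfolding Q_def by (rule mult_adj_selQ[OF selQ_carrier])
    show ?thesis unfolding h by (rule eq_matI) (auto simp: Q_def selQ_def)
  qed
  have QPa: "Q * mat_adjoint P = 0\<^sub>m q N"
  proof -
    have h: "Q * mat_adjoint P = mat q N (\<lambda>(i,k). Q $$ (i,k))"
      unfolding Q_def P_def by (rule mult_adj_selP[OF _ selQ_carrier]) simp
    show ?thesis unfolding h by (rule eq_matI) (auto simp: Q_def selQ_def)
  qed
  have cWa: "mat_adjoint W \<in> carrier_mat (N+q) q" using cW by simp
  have QWa: "Q * mat_adjoint W = 1\<^sub>m q"
  proof -
    have "Q * mat_adjoint W = Q * mat_adjoint Q - Q * (mat_adjoint P * (Ki * Y))"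
      unfolding Wa by (rule mult_minus_distrib_mat[OF cQ cQa mult_carrier_mat[OF cPa cKiY]])
    also have "Q * (mat_adjoint P * (Ki * Y)) = (Q * mat_adjoint P) * (Ki * Y)"
      by (rule assoc_mult_mat[symmetric, OF cQ cPa cKiY])
    also have "\<dots> = 0\<^sub>m q q" unfolding QPa by (rule left_mult_zero_mat[OF cKiY])
    finally show ?thesis unfolding QQa by (simp only: ent_one_minus_zero)
  qed
  have injH: "x = 0\<^sub>v q" if x: "x \<in> carrier_vec q" and Hx: "H *\<^sub>v x = 0\<^sub>v q" for x
  proof -
    have cWx: "mat_adjoint W *\<^sub>v x \<in> carrier_vec (N+q)" using cWa x by simp
    have "Kj *\<^sub>v (mat_adjoint W *\<^sub>v x) = (Kj * mat_adjoint W) *\<^sub>v x"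
      by (rule assoc_mult_mat_vec[symmetric, OF cKj cWa x])
    also have "\<dots> = (mat_adjoint Q * H) *\<^sub>v x" by (simp only: I1)
    also have "\<dots> = mat_adjoint Q *\<^sub>v (H *\<^sub>v x)" by (rule assoc_mult_mat_vec[OF cQa cH x])
    also have "\<dots> = mat_adjoint Q *\<^sub>v 0\<^sub>v q" by (simp only: Hx)
    also have "\<dots> = 0\<^sub>v (N+q)" by (rule mat_vec_zero[OF cQa])
    finally have "Kj *\<^sub>v (mat_adjoint W *\<^sub>v x) = 0\<^sub>v (N+q)" .
    then have Wx: "mat_adjoint W *\<^sub>v x = 0\<^sub>v (N+q)"
      using inj1[unfolded e1, OF cWx] unfolding Kj_def by simp
    have "x = 1\<^sub>m q *\<^sub>v x" using x by simp
    also have "\<dots> = (Q * mat_adjoint W) *\<^sub>v x" by (simp only: QWa)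
    also have "\<dots> = Q *\<^sub>v (mat_adjoint W *\<^sub>v x)" by (rule assoc_mult_mat_vec[OF cQ cWa x])
    also have "\<dots> = 0\<^sub>v q" unfolding Wx by (rule mat_vec_zero[OF cQ])
    finally show ?thesis .
  qed
  have detH: "det H \<noteq> 0" by (rule inj_det[OF cH injH])
  define Hi where "Hi = minv H"
  have sHi: "Hi \<in> carrier_mat q q" "H * Hi = 1\<^sub>m q" using minv_spec[OF cH detH] unfolding Hi_def by auto
  define G where "G = mat_adjoint P * Ki * P + mat_adjoint W * Hi * W"
  have KjG: "Kj * G = 1\<^sub>m (N+q)" unfolding G_def
    by (rule block_inv_alg(2)[OF cK sK(1) cY cYa cD cH sHi(1) cKj cP cQ cPa cQa sK(2) sHi(2) L1' L2' Hdef Wdef Wa PQ])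
  have cG: "G \<in> carrier_mat (N+q) (N+q)" unfolding G_def
    by (rule add_carrier_mat) (rule mult_carrier_mat[OF mult_carrier_mat[OF cWa sHi(1)] cW])
  have minvKj: "minv Kj = G" by (rule minv_unique[OF cKj cG KjG])
  have cR1: "Rm q (Suc m) w \<in> carrier_mat (N+q) (N+q)" for w
    using Rm_spec[of q "Suc m" w] unfolding e1 by auto
  have cR0: "Rm q m w \<in> carrier_mat N N" for w
    using Rm_spec[of q m w] unfolding N_def by auto
  have hR: "P * Rm q (Suc m) w = Rm q m w * P" for w
    unfolding P_def N_def by (rule L6[OF q])
  have cu1: "u1 q b s (Suc m) \<in> carrier_mat (N+q) q"
    unfolding u1_def e1[symmetric] using blk_carrier[of q "Suc m + 1" 1] by simp
  have cv1: "vm q (Suc m) \<in> carrier_mat (N+q) q"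
    unfolding vm_def e1[symmetric] using blk_carrier[of q "Suc m + 1" 1] by simp
  have Pu: "P * u1 q b s (Suc m) = u1 q b s m" unfolding P_def N_def by (rule L7u)
  have Pv: "P * vm q (Suc m) = vm q m" unfolding P_def N_def by (rule L7v)
  have cu0: "u1 q b s m \<in> carrier_mat N q" using mult_carrier_mat[OF cP cu1] unfolding Pu .
  have cv0: "vm q m \<in> carrier_mat N q" using mult_carrier_mat[OF cP cv1] unfolding Pv .
  have Th: "Theta1 q b s (Suc m) w = W * Rm q (Suc m) w * u1 q b s (Suc m)" for w
    unfolding Theta1_def W_def by simp
  have Ga: "Gamma1 q b s (Suc m) w = W * Rm q (Suc m) w * vm q (Suc m)" for w
    unfolding Gamma1_def W_def by simp
  have Kinv: "minv (K1 q b s m) = Ki" unfolding Ki_def K_def ..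
  have Hinv: "minv (Khat1 q b s (Suc m)) = Hi" unfolding Hi_def H_def ..
  have EG: "mat_adjoint X1 * mat_adjoint (Rm q (Suc m) (cnj z)) * minv Kj * Rm q (Suc m) (complex_of_real a) * Z1
      = mat_adjoint (P * X1) * mat_adjoint (Rm q m (cnj z)) * Ki * Rm q m (complex_of_real a) * (P * Z1)
        + mat_adjoint (W * Rm q (Suc m) (cnj z) * X1) * Hi * (W * Rm q (Suc m) (complex_of_real a) * Z1)"
    if cX: "X1 \<in> carrier_mat (N+q) q" and cZ: "Z1 \<in> carrier_mat (N+q) q" for X1 Z1
    unfolding minvKj G_def by (rule E_gen[OF cP cW sK(1) sHi(1) cR1 cR1 cR0 cR0 cX cZ hR hR])
  have cA: "mat_adjoint X * mat_adjoint (Rm q m w) * Ki * Rm q m w' * Z \<in> carrier_mat q q"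
    if cX: "X \<in> carrier_mat N q" and cZ: "Z \<in> carrier_mat N q" for X Z w w'
    by (rule mult_carrier_mat[OF mult_carrier_mat[OF mult_carrier_mat[OF mult_carrier_mat[OF adj_carrier[OF cX] adj_carrier[OF cR0]] sK(1)] cR0] cZ])
  have cB: "mat_adjoint (W * Rm q (Suc m) w * X) * Hi * (W * Rm q (Suc m) w' * Z) \<in> carrier_mat q q"
    if cX: "X \<in> carrier_mat (N+q) q" and cZ: "Z \<in> carrier_mat (N+q) q" for X Z w w'
    by (rule mult_carrier_mat[OF mult_carrier_mat[OF adj_carrier[OF mult_carrier_mat[OF mult_carrier_mat[OF cW cR1] cX]] sHi(1)] mult_carrier_mat[OF mult_carrier_mat[OF cW cR1] cZ]])
  show ?thesis
  proof (intro conjI)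
    show "alpha2 q a b s (Suc m) z = alpha2 q a b s m z
            - (z - complex_of_real a) \<cdot>\<^sub>m (mat_adjoint (Theta1 q b s (Suc m) (cnj z))
                 * minv (Khat1 q b s (Suc m)) * Gamma1 q b s (Suc m) (complex_of_real a))"
      unfolding alpha2_def Kj_def[symmetric] EG[OF cu1 cv1] Pu Pv Kinv Hinv Th Ga
      by (rule comb_alpha[OF cA[OF cu0 cv0] cB[OF cu1 cv1]])
    show "beta2 q a b s (Suc m) z = beta2 q a b s m z
            + (z - complex_of_real a) \<cdot>\<^sub>m (mat_adjoint (Theta1 q b s (Suc m) (cnj z))
                 * minv (Khat1 q b s (Suc m)) * Theta1 q b s (Suc m) (complex_of_real a))"
      unfolding beta2_def Kj_def[symmetric] EG[OF cu1 cu1] Pu Pv Kinv Hinv Th Ga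
      by (rule comb_beta[OF cA[OF cu0 cu0] cB[OF cu1 cu1]])
    show "gamma2 q a b s (Suc m) z = gamma2 q a b s m z
            - (z - complex_of_real a) \<cdot>\<^sub>m (mat_adjoint (Gamma1 q b s (Suc m) (cnj z))
                 * minv (Khat1 q b s (Suc m)) * Gamma1 q b s (Suc m) (complex_of_real a))"
      unfolding gamma2_def Kj_def[symmetric] EG[OF cv1 cv1] Pu Pv Kinv Hinv Th Ga
      by (rule comb_gamma[OF cA[OF cv0 cv0] cB[OF cv1 cv1]])
    show "delta2 q a b s (Suc m) z = delta2 q a b s m z
            + (z - complex_of_real a) \<cdot>\<^sub>m (mat_adjoint (Gamma1 q b s (Suc m) (cnj z))
                 * minv (Khat1 q b s (Suc m)) * Theta1 q b s (Suc m) (complex_of_real a))"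
      unfolding delta2_def Kj_def[symmetric] EG[OF cv1 cu1] Pu Pv Kinv Hinv Th Ga
      by (rule comb_delta[OF cA[OF cv0 cu0] cB[OF cv1 cu1]])
  qed
qed

theorem mainTheorem2:
  fixes q n :: nat and a b :: real and s :: "nat \<Rightarrow> complex mat"
    and j :: nat and z :: complex
  assumes "1 \<le> q" and "1 \<le> n" and "a < b"
    and "\<And>i. i \<le> 2*n+1 \<Longrightarrow> s i \<in> carrier_mat q q \<and> hermitian_mat (s i)"
    and "pos_def_mat (K1 q b s n)"
    and "1 \<le> j" and "j \<le> n"
  shows "alpha2 q a b s j z = alpha2 q a b s (j-1) z
            - (z - complex_of_real a) \<cdot>\<^sub>m (mat_adjoint (Theta1 q b s j (cnj z))
                 * minv (Khat1 q b s j) * Gamma1 q b s j (complex_of_real a))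
    \<and> beta2 q a b s j z = beta2 q a b s (j-1) z
            + (z - complex_of_real a) \<cdot>\<^sub>m (mat_adjoint (Theta1 q b s j (cnj z))
                 * minv (Khat1 q b s j) * Theta1 q b s j (complex_of_real a))
    \<and> gamma2 q a b s j z = gamma2 q a b s (j-1) z
            - (z - complex_of_real a) \<cdot>\<^sub>m (mat_adjoint (Gamma1 q b s j (cnj z))
                 * minv (Khat1 q b s j) * Gamma1 q b s j (complex_of_real a))
    \<and> delta2 q a b s j z = delta2 q a b s (j-1) z
            + (z - complex_of_real a) \<cdot>\<^sub>m (mat_adjoint (Gamma1 q b s j (cnj z))
                 * minv (Khat1 q b s j) * Theta1 q b s j (complex_of_real a))"
proof -
  obtain m where jm: "j = Suc m" using assms(6) by (cases j) auto
  have mn: "m \<le> n" and smn: "Suc m \<le> n" using assms(7) jm by simp_all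
  have sH: "\<And>i. i \<le> 2*(m+1)+1 \<Longrightarrow> s i \<in> carrier_mat q q \<and> hermitian_mat (s i)"
    using assms(4) smn by simp
  have inj0: "\<And>v. v \<in> carrier_vec ((m+1)*q) \<Longrightarrow> K1 q b s m *\<^sub>v v = 0\<^sub>v ((m+1)*q) \<Longrightarrow> v = 0\<^sub>v ((m+1)*q)"
    by (rule K_restrict_inj[OF assms(5) mn])
  have inj1: "\<And>v. v \<in> carrier_vec ((Suc m+1)*q) \<Longrightarrow> K1 q b s (Suc m) *\<^sub>v v = 0\<^sub>v ((Suc m+1)*q) \<Longrightarrow> v = 0\<^sub>v ((Suc m+1)*q)"
    by (rule K_restrict_inj[OF assms(5) smn])
  show ?thesis unfolding jm diff_Suc_1 by (rule main_m[OF assms(1) sH inj0 inj1])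
qed

end
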